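(* Let $\Gamma$ be a metrized graph with $v$ vertices. Then $$(v-2)\, r(\Gamma)= \sum_{e_i \in E(\Gamma)} \frac{R_i}{L_i+R_i}\, r(\overline{\Gamma}_i),\qquad\text{where } r(\Gamma):=\sum_{e_i \in E(\Gamma)}\frac{L_i R_i}{L_i+R_i}.$$
   Context: A metrized graph $\Gamma$ is a finite connected graph (multiple edges and self-loops allowed) each of whose edges is identified with a closed segment of positive length, with a finite nonempty vertex set $V(\Gamma)$ containing every point of valence $\neq2$; $v=\#V(\Gamma)$, $E(\Gamma)$ its edge set, $L_i$ the length of $e_i$. For an edge $e_i$ with end points $p_i,q_i$, $R_i$ is the effective resistance between $p_i$ and $q_i$ in $\Gamma-e_i$ (interior of $e_i$ deleted; edges as resistors of resistance equal to length); $R_i=0$ for a self-loop; if $e_i$ is a bridge, every expression involving $R_i$ is interpreted as its limit as $R_i\to\infty$ (so its term in $r(\Gamma)$ is $L_i$ and $R_i/(L_i+R_i)=1$). $\overline\Gamma_i$ is the metrized graph obtained by contracting $e_i$ to a point, with vertex set the image of $V(\Gamma)$; $r(\overline\Gamma_i)$ is computed in $\overline\Gamma_i$. *)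

theory Defs
  imports Complex_Main
begin

text \<open>A metrized graph is modelled by a finite vertex set V, a finite edge index set E,
  an endpoint map ends (ends e = (p_e, q_e); p_e = q_e for a self-loop) and edge lengths L.\<close>

definition adj_rel :: "'e set \<Rightarrow> ('e \<Rightarrow> 'v \<times> 'v) \<Rightarrow> 'v \<Rightarrow> 'v \<Rightarrow> bool" where
  "adj_rel E ends x y \<longleftrightarrow> (\<exists>e\<in>E. ends e = (x, y) \<or> ends e = (y, x))"

definition reachable :: "'e set \<Rightarrow> ('e \<Rightarrow> 'v \<times> 'v) \<Rightarrow> 'v \<Rightarrow> 'v \<Rightarrow> bool" where
  "reachable E ends x y \<longleftrightarrow> (adj_rel E ends)\<^sup>*\<^sup>* x y"

definition metrized_graph ::
  "'v set \<Rightarrow> 'e set \<Rightarrow> ('e \<Rightarrow> 'v \<times> 'v) \<Rightarrow> ('e \<Rightarrow> real) \<Rightarrow> bool" where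
  "metrized_graph V E ends L \<longleftrightarrow>
     finite V \<and> V \<noteq> {} \<and> finite E \<and>
     (\<forall>e\<in>E. fst (ends e) \<in> V \<and> snd (ends e) \<in> V \<and> L e > 0) \<and>
     (\<forall>x\<in>V. \<forall>y\<in>V. reachable E ends x y)"

text \<open>Dirichlet energy of a potential f on the resistor network (edge resistance = length).\<close>
definition energy :: "'e set \<Rightarrow> ('e \<Rightarrow> 'v \<times> 'v) \<Rightarrow> ('e \<Rightarrow> real) \<Rightarrow> ('v \<Rightarrow> real) \<Rightarrow> real" where
  "energy E ends L f = (\<Sum>e\<in>E. (f (fst (ends e)) - f (snd (ends e)))\<^sup>2 / L e)"

text \<open>Effective resistance between p and q (Dirichlet principle: the effective conductance is
  the minimal energy of a potential that is 1 at p and 0 at q). Meaningful when p, q are connected.\<close>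
definition eff_res :: "'e set \<Rightarrow> ('e \<Rightarrow> 'v \<times> 'v) \<Rightarrow> ('e \<Rightarrow> real) \<Rightarrow> 'v \<Rightarrow> 'v \<Rightarrow> real" where
  "eff_res E ends L p q =
     (if p = q then 0 else 1 / Inf {energy E ends L f | f. f p = 1 \<and> f q = 0})"

text \<open>The factor R_i/(L_i+R_i), where R_i is the effective resistance between the endpoints
  of e in the graph with e deleted; equal to 1 (limit R_i \<rightarrow> \<infinity>) when e is a bridge.\<close>
definition res_ratio :: "'e set \<Rightarrow> ('e \<Rightarrow> 'v \<times> 'v) \<Rightarrow> ('e \<Rightarrow> real) \<Rightarrow> 'e \<Rightarrow> real" where
  "res_ratio E ends L e =
     (let p = fst (ends e); q = snd (ends e) in
      if reachable (E - {e}) ends p q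
      then eff_res (E - {e}) ends L p q / (L e + eff_res (E - {e}) ends L p q)
      else 1)"

definition r_inv :: "'e set \<Rightarrow> ('e \<Rightarrow> 'v \<times> 'v) \<Rightarrow> ('e \<Rightarrow> real) \<Rightarrow> real" where
  "r_inv E ends L = (\<Sum>e\<in>E. L e * res_ratio E ends L e)"

definition contract_vertex :: "('e \<Rightarrow> 'v \<times> 'v) \<Rightarrow> 'e \<Rightarrow> 'v \<Rightarrow> 'v" where
  "contract_vertex ends e x = (if x = snd (ends e) then fst (ends e) else x)"

definition contract_ends :: "('e \<Rightarrow> 'v \<times> 'v) \<Rightarrow> 'e \<Rightarrow> ('e \<Rightarrow> 'v \<times> 'v)" where
  "contract_ends ends e = (\<lambda>d. map_prod (contract_vertex ends e) (contract_vertex ends e) (ends d))"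

text \<open>The contracted graph has vertex set contract_vertex ends e ` V, edge set E - {e},
  endpoint map contract_ends ends e and the same lengths.\<close>

end

theory Submission
  imports Defs "HOL-Combinatorics.Permutations"
begin

definition det_on :: "'a set \<Rightarrow> ('a \<Rightarrow> 'a \<Rightarrow> real) \<Rightarrow> real" where
  "det_on S M = (\<Sum>p\<in>{p. p permutes S}. of_int (sign p) * (\<Prod>i\<in>S. M i (p i)))"

lemma det_on_cong:
  assumes "\<And>i j. i \<in> S \<Longrightarrow> j \<in> S \<Longrightarrow> M i j = N i j"
  shows "det_on S M = det_on S N"
  unfolding det_on_def
proof (rule sum.cong[OF refl])
  fix p assume "p \<in> {p. p permutes S}"
  then have "p permutes S" by simp
  show "of_int (sign p) * (\<Prod>i\<in>S. M i (p i)) = of_int (sign p) * (\<Prod>i\<in>S. N i (p i))"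
  proof -
    have "(\<Prod>i\<in>S. M i (p i)) = (\<Prod>i\<in>S. N i (p i))"
      by (rule prod.cong[OF refl]) (use assms permutes_in_image[OF \<open>p permutes S\<close>] in blast)
    then show ?thesis by simp
  qed
qed

lemma det_on_empty [simp]: "det_on {} M = 1"
  unfolding det_on_def by simp

lemma det_on_sing [simp]: "det_on {a} M = M a a"
  unfolding det_on_def by simp

lemma permutes_fix_eq:
  assumes "k \<in> S"
  shows "{p. p permutes S \<and> p k = k} = {p. p permutes (S - {k})}"
proof -
  have "p permutes (S - {k})" if "p permutes S" "p k = k" for p
    using that unfolding permutes_def by auto
  moreover have "p permutes S \<and> p k = k" if "p permutes (S - {k})" for p
    using that permutes_subset[OF that] unfolding permutes_def by auto
  ultimately show ?thesis by blast
qed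

lemma det_on_fix_part:
  assumes fin: "finite S" and k: "k \<in> S"
  shows "(\<Sum>p\<in>{p. p permutes S \<and> p k = k}. of_int (sign p) * (\<Prod>i\<in>S. M i (p i)))
       = M k k * det_on (S - {k}) M"
proof -
  have "(\<Sum>p\<in>{p. p permutes S \<and> p k = k}. of_int (sign p) * (\<Prod>i\<in>S. M i (p i)))
      = (\<Sum>p\<in>{p. p permutes (S - {k})}. of_int (sign p) * (\<Prod>i\<in>S. M i (p i)))"
    using permutes_fix_eq[OF k] by simp
  also have "\<dots> = (\<Sum>p\<in>{p. p permutes (S - {k})}. M k k * (of_int (sign p) * (\<Prod>i\<in>S-{k}. M i (p i))))"
  proof (rule sum.cong[OF refl])
    fix p assume "p \<in> {p. p permutes (S - {k})}"
    then have "p k = k" unfolding permutes_def by auto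
    then show "of_int (sign p) * (\<Prod>i\<in>S. M i (p i)) = M k k * (of_int (sign p) * (\<Prod>i\<in>S-{k}. M i (p i)))"
      using prod.remove[OF fin k, of "\<lambda>i. M i (p i)"] by simp
  qed
  also have "\<dots> = M k k * det_on (S - {k}) M"
    unfolding det_on_def by (simp add: sum_distrib_left)
  finally show ?thesis .
qed

lemma det_on_split:
  assumes fin: "finite S"
  shows "det_on S M = (\<Sum>p\<in>{p. p permutes S \<and> p k = k}. of_int (sign p) * (\<Prod>i\<in>S. M i (p i)))
     + (\<Sum>p\<in>{p. p permutes S \<and> p k \<noteq> k}. of_int (sign p) * (\<Prod>i\<in>S. M i (p i)))"
proof -
  have f: "finite {p. p permutes S}" using finite_permutations[OF fin] .
  have "det_on S M = (\<Sum>p\<in>{p. p permutes S} \<inter> {p. p k = k}. of_int (sign p) * (\<Prod>i\<in>S. M i (p i)))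
     + (\<Sum>p\<in>{p. p permutes S} - {p. p k = k}. of_int (sign p) * (\<Prod>i\<in>S. M i (p i)))"
    unfolding det_on_def using sum.Int_Diff[OF f] by blast
  moreover have "{p. p permutes S} \<inter> {p. p k = k} = {p. p permutes S \<and> p k = k}" by blast
  moreover have "{p. p permutes S} - {p. p k = k} = {p. p permutes S \<and> p k \<noteq> k}" by blast
  ultimately show ?thesis by simp
qed

lemma det_on_row_expand:
  assumes fin: "finite S" and k: "k \<in> S" and z: "\<And>j. j \<in> S \<Longrightarrow> j \<noteq> k \<Longrightarrow> M k j = 0"
  shows "det_on S M = M k k * det_on (S - {k}) M"
proof -
  have "(\<Sum>p\<in>{p. p permutes S \<and> p k \<noteq> k}. of_int (sign p) * (\<Prod>i\<in>S. M i (p i))) = 0"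
  proof (rule sum.neutral, safe)
    fix p assume p: "p permutes S" "p k \<noteq> k"
    have "p k \<in> S" using permutes_in_image[OF p(1)] k by simp
    then have "M k (p k) = 0" using z p(2) by simp
    then have "(\<Prod>i\<in>S. M i (p i)) = 0" using fin k by (auto simp: prod_zero_iff)
    then show "of_int (sign p) * (\<Prod>i\<in>S. M i (p i)) = 0" by simp
  qed
  then show ?thesis using det_on_split[OF fin, of M k] det_on_fix_part[OF fin k, of M] by linarith
qed

lemma det_on_col_expand:
  assumes fin: "finite S" and k: "k \<in> S" and z: "\<And>j. j \<in> S \<Longrightarrow> j \<noteq> k \<Longrightarrow> M j k = 0"
  shows "det_on S M = M k k * det_on (S - {k}) M"
proof -
  have "(\<Sum>p\<in>{p. p permutes S \<and> p k \<noteq> k}. of_int (sign p) * (\<Prod>i\<in>S. M i (p i))) = 0"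
  proof (rule sum.neutral, safe)
    fix p assume p: "p permutes S" "p k \<noteq> k"
    let ?j = "inv p k"
    have j: "?j \<in> S" using p(1) k by (simp add: permutes_inv permutes_in_image)
    have pj: "p ?j = k" using p(1) by (meson permutes_inverses(1))
    have "?j \<noteq> k" using pj p(2) by auto
    then have "M ?j (p ?j) = 0" using z j pj by simp
    then have "(\<Prod>i\<in>S. M i (p i)) = 0" using fin j by (auto simp: prod_zero_iff)
    then show "of_int (sign p) * (\<Prod>i\<in>S. M i (p i)) = 0" by simp
  qed
  then show ?thesis using det_on_split[OF fin, of M k] det_on_fix_part[OF fin k, of M] by linarith
qed

lemma det_on_zero_row:
  assumes fin: "finite S" and k: "k \<in> S" and z: "\<And>j. j \<in> S \<Longrightarrow> M k j = 0"
  shows "det_on S M = 0"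
  using det_on_row_expand[OF fin k] z k by simp

lemma det_on_identical_rows:
  assumes fin: "finite S" and k: "k \<in> S" and l: "l \<in> S" and kl: "k \<noteq> l"
    and eq: "\<And>j. j \<in> S \<Longrightarrow> M k j = M l j"
  shows "det_on S M = 0"
proof -
  let ?t = "Transposition.transpose k l"
  have t: "?t permutes S" using permutes_swap_id[OF k l] .
  have rows: "M (?t i) j = M i j" if "j \<in> S" for i j
    using eq[OF that] by (auto simp: Transposition.transpose_def)
  have "det_on S M = (\<Sum>p\<in>{p. p permutes S}. of_int (sign (p \<circ> ?t)) * (\<Prod>i\<in>S. M i ((p \<circ> ?t) i)))"
    unfolding det_on_def by (rule sum_permutations_compose_right[OF t])
  also have "\<dots> = (\<Sum>p\<in>{p. p permutes S}. - (of_int (sign p) * (\<Prod>i\<in>S. M i (p i))))"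
  proof (rule sum.cong[OF refl])
    fix p assume "p \<in> {p. p permutes S}"
    then have p: "p permutes S" by simp
    have sg: "sign (p \<circ> ?t) = - sign p"
      using sign_compose[of p ?t] permutation_permutes fin p t sign_swap_id[of k l] kl by auto
    have "(\<Prod>i\<in>S. M i ((p \<circ> ?t) i)) = (\<Prod>i\<in>S. M (?t i) (p (?t i)))"
      using rows permutes_in_image[OF p] permutes_in_image[OF t] by (intro prod.cong) auto
    also have "\<dots> = (\<Prod>i\<in>S. M i (p i))"
      using prod.permute[OF t, of "\<lambda>i. M i (p i)"] by (simp add: comp_def)
    finally show "of_int (sign (p \<circ> ?t)) * (\<Prod>i\<in>S. M i ((p \<circ> ?t) i)) = - (of_int (sign p) * (\<Prod>i\<in>S. M i (p i)))"
      using sg by simp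
  qed
  also have "\<dots> = - det_on S M" unfolding det_on_def by (simp add: sum_negf)
  finally show ?thesis by simp
qed

definition rowupd :: "('a \<Rightarrow> 'a \<Rightarrow> real) \<Rightarrow> 'a \<Rightarrow> ('a \<Rightarrow> real) \<Rightarrow> 'a \<Rightarrow> 'a \<Rightarrow> real" where
  "rowupd M k r = (\<lambda>i. if i = k then r else M i)"

lemma det_on_row_linear:
  assumes fin: "finite S" and k: "k \<in> S"
  shows "det_on S (rowupd M k (\<lambda>j. u j + t * w j)) = det_on S (rowupd M k u) + t * det_on S (rowupd M k w)"
proof -
  have "of_int (sign p) * (\<Prod>i\<in>S. rowupd M k (\<lambda>j. u j + t * w j) i (p i))
      = of_int (sign p) * (\<Prod>i\<in>S. rowupd M k u i (p i)) + t * (of_int (sign p) * (\<Prod>i\<in>S. rowupd M k w i (p i)))"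
    for p
  proof -
    have P: "(\<Prod>i\<in>S. rowupd M k r i (p i)) = r (p k) * (\<Prod>i\<in>S-{k}. M i (p i))" for r
    proof -
      have "(\<Prod>i\<in>S. rowupd M k r i (p i)) = rowupd M k r k (p k) * (\<Prod>i\<in>S-{k}. rowupd M k r i (p i))"
        by (rule prod.remove[OF fin k])
      also have "(\<Prod>i\<in>S-{k}. rowupd M k r i (p i)) = (\<Prod>i\<in>S-{k}. M i (p i))"
        by (rule prod.cong) (auto simp: rowupd_def)
      finally show ?thesis by (simp add: rowupd_def)
    qed
    show ?thesis unfolding P by (simp add: algebra_simps)
  qed
  then show ?thesis unfolding det_on_def by (simp add: sum.distrib sum_distrib_left)
qed

lemma det_on_row_add:
  assumes fin: "finite S" and k: "k \<in> S" and l: "l \<in> S" and kl: "k \<noteq> l"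
  shows "det_on S (rowupd M k (\<lambda>j. M k j + t * M l j)) = det_on S M"
proof -
  have "det_on S (rowupd M k (\<lambda>j. M k j + t * M l j)) = det_on S (rowupd M k (M k)) + t * det_on S (rowupd M k (M l))"
    by (rule det_on_row_linear[OF fin k])
  moreover have "rowupd M k (M k) = M" unfolding rowupd_def by auto
  moreover have "det_on S (rowupd M k (M l)) = 0"
    by (rule det_on_identical_rows[OF fin k l kl]) (simp add: rowupd_def kl[symmetric])
  ultimately show ?thesis by simp
qed

lemma det_on_pivot:
  assumes fin: "finite S" and x: "x \<in> S" and nz: "M x x \<noteq> 0"
  shows "det_on S M = M x x * det_on (S - {x}) (\<lambda>y z. M y z - M y x * M x z / M x x)"
proof -
  define N where "N T = (\<lambda>i. if i \<in> T then (\<lambda>j. M i j - M i x / M x x * M x j) else M i)" for T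
  have step: "T \<subseteq> S - {x} \<Longrightarrow> det_on S (N T) = det_on S M" for T
  proof -
    assume T: "T \<subseteq> S - {x}"
    have "finite T" using T fin finite_subset by blast
    then show ?thesis using T
    proof (induction T rule: finite_induct)
      case empty
      have "N {} = M" unfolding N_def by auto
      then show ?case by simp
    next
      case (insert y T)
      have y: "y \<in> S" "y \<noteq> x" using insert.prems by auto
      have eq: "N (insert y T) = rowupd (N T) y (\<lambda>j. N T y j + (- M y x / M x x) * N T x j)"
        using insert.hyps(2) insert.prems unfolding N_def rowupd_def by (auto intro!: ext)
      have "det_on S (N (insert y T)) = det_on S (N T)"
        unfolding eq by (rule det_on_row_add[OF fin y(1) x y(2)])
      then show ?case using insert by auto
    qed
  qed
  have "det_on S M = det_on S (N (S - {x}))" using step by simp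
  also have "\<dots> = N (S - {x}) x x * det_on (S - {x}) (N (S - {x}))"
    by (rule det_on_col_expand[OF fin x]) (use nz in \<open>auto simp: N_def\<close>)
  also have "det_on (S - {x}) (N (S - {x})) = det_on (S - {x}) (\<lambda>y z. M y z - M y x * M x z / M x x)"
    by (rule det_on_cong) (auto simp: N_def)
  finally show ?thesis by (simp add: N_def)
qed

definition lapc :: "'v set \<Rightarrow> ('v \<Rightarrow> 'v \<Rightarrow> real) \<Rightarrow> 'v \<Rightarrow> 'v \<Rightarrow> real" where
  "lapc V c y z = (if y = z then (\<Sum>w\<in>V-{y}. c y w) else - c y z)"

definition energyc :: "'v set \<Rightarrow> ('v \<Rightarrow> 'v \<Rightarrow> real) \<Rightarrow> ('v \<Rightarrow> real) \<Rightarrow> real" where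
  "energyc V c f = (\<Sum>y\<in>V. \<Sum>z\<in>V. c y z * (f y - f z)\<^sup>2) / 2"

definition cadj :: "'v set \<Rightarrow> ('v \<Rightarrow> 'v \<Rightarrow> real) \<Rightarrow> 'v \<Rightarrow> 'v \<Rightarrow> bool" where
  "cadj V c u v \<longleftrightarrow> u \<in> V \<and> v \<in> V \<and> u \<noteq> v \<and> c u v > 0"

definition cconn :: "'v set \<Rightarrow> ('v \<Rightarrow> 'v \<Rightarrow> real) \<Rightarrow> bool" where
  "cconn V c \<longleftrightarrow> (\<forall>x\<in>V. \<forall>y\<in>V. (cadj V c)\<^sup>*\<^sup>* x y)"

definition goodc :: "'v set \<Rightarrow> ('v \<Rightarrow> 'v \<Rightarrow> real) \<Rightarrow> bool" where
  "goodc V c \<longleftrightarrow> finite V \<and> (\<forall>y z. c y z = c z y) \<and> (\<forall>y z. c y z \<ge> 0)"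

definition degc :: "'v set \<Rightarrow> ('v \<Rightarrow> 'v \<Rightarrow> real) \<Rightarrow> 'v \<Rightarrow> real" where
  "degc V c x = (\<Sum>w\<in>V-{x}. c x w)"

definition sm :: "'v set \<Rightarrow> ('v \<Rightarrow> 'v \<Rightarrow> real) \<Rightarrow> 'v \<Rightarrow> 'v \<Rightarrow> 'v \<Rightarrow> real" where
  "sm V c x = (\<lambda>y z. c y z + c x y * c x z / degc V c x)"

lemma sq_sum_identity:
  fixes a f :: "'v \<Rightarrow> real"
  shows "(\<Sum>y\<in>A. \<Sum>z\<in>A. a y * a z * (f y - f z)\<^sup>2)
       = 2 * (\<Sum>y\<in>A. a y) * (\<Sum>y\<in>A. a y * (f y)\<^sup>2) - 2 * (\<Sum>y\<in>A. a y * f y)\<^sup>2"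
proof -
  have e: "a y * a z * (f y - f z)\<^sup>2 = a z * (a y * (f y)\<^sup>2) + a y * (a z * (f z)\<^sup>2) - 2 * ((a y * f y) * (a z * f z))" for y z
    by (simp add: power2_eq_square algebra_simps)
  have p1: "(\<Sum>y\<in>A. \<Sum>z\<in>A. a z * (a y * (f y)\<^sup>2)) = (\<Sum>y\<in>A. a y) * (\<Sum>y\<in>A. a y * (f y)\<^sup>2)"
    unfolding sum_product by (rule sum.swap)
  have p2: "(\<Sum>y\<in>A. \<Sum>z\<in>A. a y * (a z * (f z)\<^sup>2)) = (\<Sum>y\<in>A. a y) * (\<Sum>y\<in>A. a y * (f y)\<^sup>2)"
    by (simp add: sum_product)
  have p3: "(\<Sum>y\<in>A. \<Sum>z\<in>A. 2 * ((a y * f y) * (a z * f z))) = 2 * (\<Sum>y\<in>A. a y * f y)\<^sup>2"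
  proof -
    have "(\<Sum>y\<in>A. \<Sum>z\<in>A. 2 * ((a y * f y) * (a z * f z))) = 2 * (\<Sum>y\<in>A. \<Sum>z\<in>A. (a y * f y) * (a z * f z))"
      by (simp only: sum_distrib_left)
    also have "\<dots> = 2 * (\<Sum>y\<in>A. a y * f y)\<^sup>2"
      by (simp only: power2_eq_square sum_product)
    finally show ?thesis .
  qed
  show ?thesis
    unfolding e sum_subtractf sum.distrib p1 p2 p3 by simp
qed

lemma goodc_degc_nonneg: "goodc V c \<Longrightarrow> degc V c x \<ge> 0"
  unfolding goodc_def degc_def by (simp add: sum_nonneg)

lemma lapc_schur:
  assumes g: "goodc V c" and x: "x \<in> V" and D: "degc V c x > 0"
    and y: "y \<in> V - {x}" and z: "z \<in> V - {x}"
  shows "lapc (V - {x}) (sm V c x) y z = lapc V c y z - lapc V c y x * lapc V c x z / lapc V c x x"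
proof -
  have fin: "finite V" and sym: "\<And>y z. c y z = c z y" using g unfolding goodc_def by auto
  have Dx: "lapc V c x x = degc V c x" unfolding lapc_def degc_def by simp
  show ?thesis
  proof (cases "y = z")
    case False
    have a: "lapc (V-{x}) (sm V c x) y z = -(c y z + c x y * c x z / degc V c x)"
      using False unfolding lapc_def sm_def by simp
    have b: "lapc V c y x = - c x y" using y by (simp add: lapc_def sym[of y x])
    have b2: "lapc V c x z = - c x z" using z by (auto simp: lapc_def)
    have b3: "lapc V c y z = - c y z" using False by (simp add: lapc_def)
    show ?thesis unfolding a b b2 b3 Dx by simp
  next
    case True
    have e: "V-{y}-{x} = V-{x}-{y}" by blast
    have s1: "(\<Sum>w\<in>V-{y}. c y w) = c y x + (\<Sum>w\<in>V-{x}-{y}. c y w)"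
    proof -
      have "x \<in> V - {y}" using x y by auto
      from sum.remove[OF _ this, of "c y"] fin show ?thesis unfolding e by simp
    qed
    have s2: "degc V c x = c x y + (\<Sum>w\<in>V-{x}-{y}. c x w)"
      unfolding degc_def using sum.remove[of "V-{x}" y "c x"] fin y by simp
    have "lapc (V - {x}) (sm V c x) y z = (\<Sum>w\<in>V-{x}-{y}. c y w) + c x y * (\<Sum>w\<in>V-{x}-{y}. c x w) / degc V c x"
      using True unfolding lapc_def sm_def by (simp add: sum.distrib sum_divide_distrib[symmetric] sum_distrib_left[symmetric])
    also have "\<dots> = (\<Sum>w\<in>V-{y}. c y w) - c y x * c x y / degc V c x"
      using s1 s2 D by (simp add: field_simps sym[of y x])
    finally have a: "lapc (V - {x}) (sm V c x) y z = (\<Sum>w\<in>V-{y}. c y w) - c y x * c x y / degc V c x" .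
    have b: "lapc V c y x = - c y x" using y by (auto simp: lapc_def)
    have b2: "lapc V c x z = - c x y" using y True by (auto simp: lapc_def)
    have b3: "lapc V c y z = (\<Sum>w\<in>V-{y}. c y w)" using True by (simp add: lapc_def)
    show ?thesis unfolding a b b2 b3 Dx by simp
  qed
qed

lemma energy_elim:
  assumes g: "goodc V c" and x: "x \<in> V" and D: "degc V c x > 0"
  shows "energyc V c f = energyc (V - {x}) (sm V c x) f
     + degc V c x * (f x - (\<Sum>w\<in>V-{x}. c x w * f w) / degc V c x)\<^sup>2"
proof -
  have fin: "finite V" and sym: "\<And>y z. c y z = c z y" using g unfolding goodc_def by auto
  let ?V0 = "V - {x}"
  let ?D = "degc V c x"
  have fin0: "finite ?V0" using fin by simp
  have V: "V = insert x ?V0" using x by auto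
  let ?g = "\<lambda>y z. c y z * (f y - f z)\<^sup>2"
  have "(\<Sum>y\<in>V. \<Sum>z\<in>V. ?g y z) = (\<Sum>z\<in>V. ?g x z) + (\<Sum>y\<in>?V0. \<Sum>z\<in>V. ?g y z)"
    by (subst V, subst sum.insert) (use fin0 in auto)
  also have "(\<Sum>z\<in>V. ?g x z) = (\<Sum>z\<in>?V0. ?g x z)"
    by (subst V, subst sum.insert) (use fin0 in auto)
  also have "(\<Sum>y\<in>?V0. \<Sum>z\<in>V. ?g y z) = (\<Sum>y\<in>?V0. ?g y x + (\<Sum>z\<in>?V0. ?g y z))"
    by (rule sum.cong[OF refl], subst V, subst sum.insert) (use fin0 in auto)
  also have "\<dots> = (\<Sum>z\<in>?V0. ?g x z) + (\<Sum>y\<in>?V0. \<Sum>z\<in>?V0. ?g y z)"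
    by (simp add: sum.distrib sym power2_commute)
  finally have E: "2 * energyc V c f = 2 * (\<Sum>z\<in>?V0. c x z * (f x - f z)\<^sup>2) + (\<Sum>y\<in>?V0. \<Sum>z\<in>?V0. ?g y z)"
    unfolding energyc_def by simp
  have "2 * energyc ?V0 (sm V c x) f = (\<Sum>y\<in>?V0. \<Sum>z\<in>?V0. ?g y z + c x y * c x z * (f y - f z)\<^sup>2 / ?D)"
    unfolding energyc_def sm_def by (simp add: algebra_simps)
  also have "\<dots> = (\<Sum>y\<in>?V0. \<Sum>z\<in>?V0. ?g y z) + (\<Sum>y\<in>?V0. \<Sum>z\<in>?V0. c x y * c x z * (f y - f z)\<^sup>2) / ?D"
    by (simp add: sum.distrib sum_divide_distrib)
  finally have E0: "2 * energyc ?V0 (sm V c x) f = (\<Sum>y\<in>?V0. \<Sum>z\<in>?V0. ?g y z)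
      + (2 * ?D * (\<Sum>y\<in>?V0. c x y * (f y)\<^sup>2) - 2 * (\<Sum>y\<in>?V0. c x y * f y)\<^sup>2) / ?D"
    using sq_sum_identity[of "c x" f ?V0] unfolding degc_def by simp
  define S1 where "S1 = (\<Sum>z\<in>?V0. c x z * f z)"
  define S2 where "S2 = (\<Sum>z\<in>?V0. c x z * (f z)\<^sup>2)"
  define G where "G = (\<Sum>y\<in>?V0. \<Sum>z\<in>?V0. ?g y z)"
  have L: "(\<Sum>z\<in>?V0. c x z * (f x - f z)\<^sup>2) = ?D * (f x)\<^sup>2 - 2 * f x * S1 + S2"
    unfolding degc_def S1_def S2_def
    by (simp add: power2_eq_square algebra_simps sum.distrib sum_subtractf sum_distrib_left sum_distrib_right)
  have E': "2 * energyc V c f = 2 * (?D * (f x)\<^sup>2 - 2 * f x * S1 + S2) + G"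
    using E L unfolding G_def by simp
  have E0': "2 * energyc ?V0 (sm V c x) f = G + (2 * ?D * S2 - 2 * S1\<^sup>2) / ?D"
    using E0 unfolding G_def S1_def S2_def by simp
  have "(\<Sum>w\<in>V-{x}. c x w * f w) = S1" unfolding S1_def by simp
  moreover have "energyc V c f = energyc ?V0 (sm V c x) f + ?D * (f x - S1 / ?D)\<^sup>2"
  proof -
    have X: "energyc V c f = G/2 + S2 + ?D*(f x)\<^sup>2 - 2*S1*f x" using E' by (simp add: algebra_simps)
    have q: "(2 * ?D * S2 - 2 * S1\<^sup>2) / ?D = 2*S2 - 2*S1\<^sup>2/?D" using D by (simp add: field_simps)
    have Y: "energyc ?V0 (sm V c x) f = G/2 + S2 - S1\<^sup>2/?D" using E0' unfolding q by simp
    have Z: "?D*(f x - S1/?D)\<^sup>2 = ?D*(f x)\<^sup>2 - 2*S1*f x + S1\<^sup>2/?D" using D by (simp add: field_simps power2_eq_square)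
    show ?thesis unfolding X Y Z by simp
  qed
  ultimately show ?thesis by simp
qed

lemma energyc_cong: "(\<And>v. v \<in> V \<Longrightarrow> f v = g v) \<Longrightarrow> energyc V c f = energyc V c g"
  unfolding energyc_def by (simp cong: sum.cong)

lemma energyc_flip: "energyc V c (\<lambda>v. 1 - f v) = energyc V c f"
  unfolding energyc_def by (simp add: power2_commute)

lemma degc_pos:
  assumes g: "goodc V c" and cc: "cconn V c" and x: "x \<in> V" and y: "y \<in> V" and xy: "y \<noteq> x"
  shows "degc V c x > 0"
proof -
  have "(cadj V c)\<^sup>*\<^sup>* x y" using cc x y unfolding cconn_def by blast
  then obtain w where w: "cadj V c x w"
    using xy by (metis converse_rtranclpE)
  then have w1: "w \<in> V - {x}" and w2: "c x w > 0" unfolding cadj_def by auto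
  have fin: "finite V" and nn: "\<And>y z. c y z \<ge> 0" using g unfolding goodc_def by auto
  show ?thesis unfolding degc_def
    using sum_pos2[of "V-{x}" w "c x"] fin w1 w2 nn by auto
qed

lemma goodc_sm:
  assumes g: "goodc V c" and D: "degc V c x > 0"
  shows "goodc (V - {x}) (sm V c x)"
  using g D unfolding goodc_def sm_def by (auto simp: mult.commute)

lemma sm_ge: "goodc V c \<Longrightarrow> degc V c x > 0 \<Longrightarrow> sm V c x y z \<ge> c y z"
  unfolding goodc_def sm_def by simp

lemma cconn_sm:
  assumes g: "goodc V c" and cc: "cconn V c" and x: "x \<in> V" and D: "degc V c x > 0"
  shows "cconn (V - {x}) (sm V c x)"
proof -
  have sym: "\<And>y z. c y z = c z y" and nn: "\<And>y z. c y z \<ge> 0" using g unfolding goodc_def by auto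
  let ?R = "cadj (V - {x}) (sm V c x)"
  have ge: "\<And>y z. sm V c x y z \<ge> c y z" using sm_ge[OF g D] .
  have via: "sm V c x u w > 0" if "c x u > 0" "c x w > 0" for u w
  proof -
    have "c x u * c x w / degc V c x > 0" using that D by simp
    then show ?thesis unfolding sm_def using nn[of u w] by linarith
  qed
  have main: "(z \<noteq> x \<longrightarrow> ?R\<^sup>*\<^sup>* y z) \<and> (z = x \<longrightarrow> (\<exists>u. u \<in> V - {x} \<and> c x u > 0 \<and> ?R\<^sup>*\<^sup>* y u))"
    if "(cadj V c)\<^sup>*\<^sup>* y z" "y \<in> V" "y \<noteq> x" for y z
    using that(1)
  proof (induction rule: rtranclp_induct)
    case base
    then show ?case using that by auto
  next
    case (step z z')
    have zz: "z \<in> V" "z' \<in> V" "z \<noteq> z'" "c z z' > 0" using step.hyps(2) unfolding cadj_def by auto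
    show ?case
    proof (cases "z = x")
      case False
      then have Rz: "?R\<^sup>*\<^sup>* y z" using step.IH by blast
      show ?thesis
      proof (cases "z' = x")
        case True
        then show ?thesis using Rz zz False sym[of z x] by auto
      next
        case False2: False
        have "?R z z'" unfolding cadj_def using zz False False2 ge[of z z'] by auto
        then show ?thesis using Rz False2 by (meson rtranclp.rtrancl_into_rtrancl)
      qed
    next
      case True
      then obtain u where u: "u \<in> V - {x}" "c x u > 0" "?R\<^sup>*\<^sup>* y u" using step.IH by blast
      have z'x: "z' \<noteq> x" using zz True by auto
      show ?thesis
      proof (cases "u = z'")
        case True
        then show ?thesis using u z'x by auto
      next
        case False
        have "?R u z'" unfolding cadj_def using u zz z'x False via[of u z'] True by auto
        then show ?thesis using u z'x by (meson rtranclp.rtrancl_into_rtrancl)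
      qed
    qed
  qed
  show ?thesis unfolding cconn_def
  proof (intro ballI)
    fix y z assume "y \<in> V - {x}" "z \<in> V - {x}"
    then show "?R\<^sup>*\<^sup>* y z" using main[of y z] cc unfolding cconn_def by auto
  qed
qed

lemma thmA_aux:
  "finite V \<Longrightarrow> card V = n \<Longrightarrow> goodc V c \<Longrightarrow> cconn V c \<Longrightarrow> p \<in> V \<Longrightarrow> q \<in> V \<Longrightarrow> p \<noteq> q \<Longrightarrow>
   det_on (V-{q}) (lapc V c) > 0 \<and> det_on (V-{p,q}) (lapc V c) > 0 \<and>
   (\<forall>f. f p = 1 \<longrightarrow> f q = 0 \<longrightarrow> det_on (V-{q}) (lapc V c) / det_on (V-{p,q}) (lapc V c) \<le> energyc V c f) \<and>
   (\<exists>f. f p = 1 \<and> f q = 0 \<and> energyc V c f = det_on (V-{q}) (lapc V c) / det_on (V-{p,q}) (lapc V c))"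
proof (induction n arbitrary: V c)
  case 0
  then show ?case by auto
next
  case (Suc n)
  note fin = Suc.prems(1) and g = Suc.prems(3) and cc = Suc.prems(4)
    and p = Suc.prems(5) and q = Suc.prems(6) and pq = Suc.prems(7)
  have sym: "\<And>y z. c y z = c z y" and nn: "\<And>y z. c y z \<ge> 0" using g unfolding goodc_def by auto
  show ?case
  proof (cases "V - {p, q} = {}")
    case True
    then have V: "V = {p, q}" using p q by auto
    have Vq: "V - {q} = {p}" using V pq by auto
    have dp: "degc V c p = c p q" unfolding degc_def using V pq by simp
    have cpos: "c p q > 0" using degc_pos[OF g cc p q] pq dp by simp
    have d1: "det_on (V - {q}) (lapc V c) = c p q"
      unfolding Vq by (simp add: lapc_def dp[unfolded degc_def])
    have en: "energyc V c f = c p q" if "f p = 1" "f q = 0" for f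
      unfolding energyc_def using V pq that sym[of q p] by simp
    have d0: "det_on (V - {p,q}) (lapc V c) = 1" unfolding True by simp
    have en2: "energyc V c (\<lambda>v. if v = p then 1 else 0) = c p q" using en[of "\<lambda>v. if v = p then 1 else 0"] pq by simp
    show ?thesis unfolding d0 d1 using cpos en en2 pq by (auto intro!: exI[of _ "\<lambda>v. if v = p then 1 else 0"])
  next
    case False
    then obtain x where x: "x \<in> V" "x \<noteq> p" "x \<noteq> q" by auto
    have D: "degc V c x > 0" using degc_pos[OF g cc x(1) p] x by auto
    let ?V = "V - {x}"
    let ?c = "sm V c x"
    have IH: "det_on (?V-{q}) (lapc ?V ?c) > 0 \<and> det_on (?V-{p,q}) (lapc ?V ?c) > 0 \<and>
      (\<forall>f. f p = 1 \<longrightarrow> f q = 0 \<longrightarrow> det_on (?V-{q}) (lapc ?V ?c) / det_on (?V-{p,q}) (lapc ?V ?c) \<le> energyc ?V ?c f) \<and>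
      (\<exists>f. f p = 1 \<and> f q = 0 \<and> energyc ?V ?c f = det_on (?V-{q}) (lapc ?V ?c) / det_on (?V-{p,q}) (lapc ?V ?c))"
      using Suc.IH[of ?V ?c] fin Suc.prems(2) goodc_sm[OF g D] cconn_sm[OF g cc x(1) D] p q pq x by auto
    have Lxx: "lapc V c x x = degc V c x" unfolding lapc_def degc_def by simp
    have piv: "det_on S (lapc V c) = degc V c x * det_on (S - {x}) (lapc ?V ?c)"
      if S: "S \<subseteq> V" "x \<in> S" for S
    proof -
      have "det_on S (lapc V c) = lapc V c x x * det_on (S - {x}) (\<lambda>y z. lapc V c y z - lapc V c y x * lapc V c x z / lapc V c x x)"
        by (rule det_on_pivot) (use fin S D Lxx finite_subset in auto)
      also have "det_on (S - {x}) (\<lambda>y z. lapc V c y z - lapc V c y x * lapc V c x z / lapc V c x x) = det_on (S - {x}) (lapc ?V ?c)"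
      proof (rule det_on_cong)
        fix i j assume ij: "i \<in> S - {x}" "j \<in> S - {x}"
        have "i \<in> V - {x}" "j \<in> V - {x}" using ij S by auto
        from lapc_schur[OF g x(1) D this]
        show "lapc V c i j - lapc V c i x * lapc V c x j / lapc V c x x = lapc ?V ?c i j" by simp
      qed
      finally show ?thesis unfolding Lxx .
    qed
    have e1: "V - {q} - {x} = ?V - {q}" and e2: "V - {p,q} - {x} = ?V - {p,q}" by auto
    have d1: "det_on (V-{q}) (lapc V c) = degc V c x * det_on (?V-{q}) (lapc ?V ?c)"
      using piv[of "V - {q}"] x unfolding e1 by auto
    have d2: "det_on (V-{p,q}) (lapc V c) = degc V c x * det_on (?V-{p,q}) (lapc ?V ?c)"
      using piv[of "V - {p,q}"] x unfolding e2 by auto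
    have ratio: "det_on (V-{q}) (lapc V c) / det_on (V-{p,q}) (lapc V c) = det_on (?V-{q}) (lapc ?V ?c) / det_on (?V-{p,q}) (lapc ?V ?c)"
      unfolding d1 d2 using D by simp
    have lb: "energyc ?V ?c f \<le> energyc V c f" for f
      using energy_elim[OF g x(1) D, of f] D by simp
    obtain f where f: "f p = 1" "f q = 0" "energyc ?V ?c f = det_on (?V-{q}) (lapc ?V ?c) / det_on (?V-{p,q}) (lapc ?V ?c)"
      using IH by blast
    define m where "m = (\<Sum>w\<in>V-{x}. c x w * f w) / degc V c x"
    define h where "h = f(x := m)"
    have hm: "(\<Sum>w\<in>V-{x}. c x w * h w) = (\<Sum>w\<in>V-{x}. c x w * f w)"
      unfolding h_def by (rule sum.cong) auto
    have "energyc V c h = energyc ?V ?c h"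
      using energy_elim[OF g x(1) D, of h] unfolding hm by (simp add: h_def m_def)
    also have "\<dots> = energyc ?V ?c f" by (rule energyc_cong) (auto simp: h_def)
    finally have eh: "energyc V c h = energyc ?V ?c f" .
    have "h p = 1" "h q = 0" using f x unfolding h_def by auto
    then show ?thesis
      using IH d1 d2 D ratio lb eh f(3) by (auto intro: order_trans)
  qed
qed

lemma thmA:
  assumes "goodc V c" "cconn V c" "p \<in> V" "q \<in> V" "p \<noteq> q"
  shows "det_on (V-{q}) (lapc V c) > 0 \<and> det_on (V-{p,q}) (lapc V c) > 0 \<and>
   (\<forall>f. f p = 1 \<longrightarrow> f q = 0 \<longrightarrow> det_on (V-{q}) (lapc V c) / det_on (V-{p,q}) (lapc V c) \<le> energyc V c f) \<and>
   (\<exists>f. f p = 1 \<and> f q = 0 \<and> energyc V c f = det_on (V-{q}) (lapc V c) / det_on (V-{p,q}) (lapc V c))"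
  using thmA_aux[OF _ refl assms] assms(1) unfolding goodc_def by blast

lemma Inf_energyc:
  assumes "goodc V c" "cconn V c" "p \<in> V" "q \<in> V" "p \<noteq> q"
  shows "Inf {energyc V c f | f. f p = 1 \<and> f q = 0} = det_on (V-{q}) (lapc V c) / det_on (V-{p,q}) (lapc V c)"
proof -
  note A = thmA[OF assms]
  show ?thesis
  proof (rule cInf_eq_minimum)
    show "det_on (V-{q}) (lapc V c) / det_on (V-{p,q}) (lapc V c) \<in> {energyc V c f | f. f p = 1 \<and> f q = 0}"
      using A by force
    show "\<And>y. y \<in> {energyc V c f | f. f p = 1 \<and> f q = 0} \<Longrightarrow> det_on (V-{q}) (lapc V c) / det_on (V-{p,q}) (lapc V c) \<le> y"
      using A by auto
  qed
qed

lemma det_indep_conn: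
  assumes g: "goodc V c" and cc: "cconn V c" and p: "p \<in> V" and q: "q \<in> V"
  shows "det_on (V-{p}) (lapc V c) = det_on (V-{q}) (lapc V c)"
proof (cases "p = q")
  case False
  note A1 = thmA[OF g cc p q False] and A2 = thmA[OF g cc q p False[symmetric]]
  have s: "V - {q, p} = V - {p, q}" by auto
  let ?d = "det_on (V-{p,q}) (lapc V c)"
  obtain f1 where f1: "f1 p = 1" "f1 q = 0" "energyc V c f1 = det_on (V-{q}) (lapc V c) / ?d" using A1 by blast
  obtain f2 where f2: "f2 q = 1" "f2 p = 0" "energyc V c f2 = det_on (V-{p}) (lapc V c) / ?d" using A2 unfolding s by blast
  have "det_on (V-{p}) (lapc V c) / ?d \<le> energyc V c (\<lambda>v. 1 - f1 v)"
    using A2 f1 unfolding s by auto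
  then have le1: "det_on (V-{p}) (lapc V c) / ?d \<le> det_on (V-{q}) (lapc V c) / ?d"
    using f1 energyc_flip by metis
  have "det_on (V-{q}) (lapc V c) / ?d \<le> energyc V c (\<lambda>v. 1 - f2 v)"
    using A1 f2 by auto
  then have le2: "det_on (V-{q}) (lapc V c) / ?d \<le> det_on (V-{p}) (lapc V c) / ?d"
    using f2 energyc_flip by metis
  have "?d > 0" using A1 by blast
  then show ?thesis using le1 le2 by (simp add: divide_le_cancel)
qed simp

lemma det_on_rows_add:
  assumes fin: "finite S" and k: "k \<in> S" and T: "T \<subseteq> S - {k}"
  shows "det_on S (rowupd M k (\<lambda>j. M k j + (\<Sum>w\<in>T. M w j))) = det_on S M"
proof -
  have "finite T" using T fin finite_subset by blast
  then show ?thesis using T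
  proof (induction T rule: finite_induct)
    case empty
    have "rowupd M k (\<lambda>j. M k j + (\<Sum>w\<in>{}. M w j)) = M" unfolding rowupd_def by auto
    then show ?case by simp
  next
    case (insert w T)
    let ?M' = "rowupd M k (\<lambda>j. M k j + (\<Sum>w\<in>T. M w j))"
    have w: "w \<in> S" "w \<noteq> k" using insert.prems by auto
    have eq: "rowupd M k (\<lambda>j. M k j + (\<Sum>w\<in>insert w T. M w j)) = rowupd ?M' k (\<lambda>j. ?M' k j + 1 * ?M' w j)"
      using insert.hyps w unfolding rowupd_def by (auto intro!: ext)
    have "det_on S (rowupd ?M' k (\<lambda>j. ?M' k j + 1 * ?M' w j)) = det_on S ?M'"
      by (rule det_on_row_add[OF fin k w(1) w(2)[symmetric]])
    then show ?case unfolding eq using insert by auto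
  qed
qed

lemma cadj_sym: "goodc V c \<Longrightarrow> cadj V c u v \<Longrightarrow> cadj V c v u"
  unfolding cadj_def goodc_def by metis

lemma cadj_rtranclp_sym:
  assumes g: "goodc V c" and r: "(cadj V c)\<^sup>*\<^sup>* u v"
  shows "(cadj V c)\<^sup>*\<^sup>* v u"
  using r
proof (induction rule: rtranclp_induct)
  case base then show ?case by simp
next
  case (step y z)
  then show ?case using cadj_sym[OF g, of y z] by (meson converse_rtranclp_into_rtranclp)
qed

lemma det_zero_disconn:
  assumes g: "goodc V c" and q: "q \<in> V" and y: "y \<in> V" and nr: "\<not> (cadj V c)\<^sup>*\<^sup>* q y"
  shows "det_on (V-{q}) (lapc V c) = 0"
proof -
  have fin: "finite V" and sym: "\<And>y z. c y z = c z y" and nn: "\<And>y z. c y z \<ge> 0" using g unfolding goodc_def by auto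
  define W where "W = {w\<in>V. \<not> (cadj V c)\<^sup>*\<^sup>* q w}"
  have yW: "y \<in> W" using y nr unfolding W_def by auto
  have WS: "W \<subseteq> V - {q}" unfolding W_def by auto
  have finW: "finite W" using WS fin finite_subset by blast
  have zero: "c w u = 0" if "w \<in> W" "u \<in> V - W" for w u
  proof (rule ccontr)
    assume "c w u \<noteq> 0"
    then have pos: "c u w > 0" using nn[of w u] sym[of w u] by auto
    have "u \<noteq> w" using that by auto
    then have "cadj V c u w" using pos that unfolding cadj_def W_def by auto
    moreover have "(cadj V c)\<^sup>*\<^sup>* q u" using that unfolding W_def by auto
    ultimately have "(cadj V c)\<^sup>*\<^sup>* q w" by (meson rtranclp.rtrancl_into_rtrancl)
    then show False using that unfolding W_def by auto
  qed
  have rowsum: "(\<Sum>w\<in>W. lapc V c w z) = 0" if z: "z \<in> V - {q}" for z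
  proof (cases "z \<in> W")
    case True
    have split: "(\<Sum>u\<in>V-{z}. c z u) = (\<Sum>u\<in>W-{z}. c z u) + (\<Sum>u\<in>V-W. c z u)"
    proof -
      have "V - {z} = (W - {z}) \<union> (V - W)" using WS True by auto
      moreover have "(W - {z}) \<inter> (V - W) = {}" by auto
      ultimately show ?thesis using fin finW by (simp add: sum.union_disjoint)
    qed
    have z0: "(\<Sum>u\<in>V-W. c z u) = 0" using zero True by simp
    have "(\<Sum>w\<in>W. lapc V c w z) = lapc V c z z + (\<Sum>w\<in>W-{z}. lapc V c w z)"
      using sum.remove[OF finW True] .
    also have "(\<Sum>w\<in>W-{z}. lapc V c w z) = - (\<Sum>w\<in>W-{z}. c z w)"
      by (simp add: lapc_def sum_negf sym)
    finally show ?thesis using split z0 by (simp add: lapc_def)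
  next
    case False
    have "lapc V c w z = 0" if "w \<in> W" for w
      using zero[of w z] that False z unfolding lapc_def by auto
    then show ?thesis by simp
  qed
  let ?S = "V - {q}"
  let ?M = "lapc V c"
  have k: "y \<in> ?S" using yW WS by auto
  have "det_on ?S ?M = det_on ?S (rowupd ?M y (\<lambda>j. ?M y j + (\<Sum>w\<in>W-{y}. ?M w j)))"
  proof -
    have "W - {y} \<subseteq> ?S - {y}" using WS by auto
    from det_on_rows_add[OF _ k this, of ?M] fin show ?thesis by simp
  qed
  also have "\<dots> = 0"
  proof (rule det_on_zero_row[OF _ k])
    show "finite ?S" using fin by simp
    fix j assume j: "j \<in> ?S"
    have "?M y j + (\<Sum>w\<in>W-{y}. ?M w j) = (\<Sum>w\<in>W. ?M w j)"
      using sum.remove[OF finW yW, of "\<lambda>w. ?M w j"] by simp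
    then show "rowupd ?M y (\<lambda>j. ?M y j + (\<Sum>w\<in>W-{y}. ?M w j)) y j = 0"
      using rowsum[OF j] unfolding rowupd_def by simp
  qed
  finally show ?thesis .
qed

lemma det_indep:
  assumes g: "goodc V c" and p: "p \<in> V" and q: "q \<in> V"
  shows "det_on (V-{p}) (lapc V c) = det_on (V-{q}) (lapc V c)"
proof (cases "cconn V c")
  case True
  then show ?thesis using det_indep_conn[OF g True p q] by simp
next
  case False
  then obtain y z where yz: "y \<in> V" "z \<in> V" "\<not> (cadj V c)\<^sup>*\<^sup>* y z" unfolding cconn_def by blast
  have nr: "\<exists>w\<in>V. \<not> (cadj V c)\<^sup>*\<^sup>* r w" if "r \<in> V" for r
  proof (rule ccontr)
    assume "\<not> ?thesis"
    then have "(cadj V c)\<^sup>*\<^sup>* r y" "(cadj V c)\<^sup>*\<^sup>* r z" using yz by auto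
    then have "(cadj V c)\<^sup>*\<^sup>* y z" using cadj_rtranclp_sym[OF g] by (meson rtranclp_trans)
    then show False using yz by auto
  qed
  obtain w1 where "w1 \<in> V" "\<not> (cadj V c)\<^sup>*\<^sup>* p w1" using nr[OF p] by blast
  then have "det_on (V-{p}) (lapc V c) = 0" using det_zero_disconn[OF g p] by blast
  moreover obtain w2 where "w2 \<in> V" "\<not> (cadj V c)\<^sup>*\<^sup>* q w2" using nr[OF q] by blast
  then have "det_on (V-{q}) (lapc V c) = 0" using det_zero_disconn[OF g q] by blast
  ultimately show ?thesis by simp
qed

definition cond :: "'e set \<Rightarrow> ('e \<Rightarrow> 'v \<times> 'v) \<Rightarrow> ('e \<Rightarrow> real) \<Rightarrow> 'v \<Rightarrow> 'v \<Rightarrow> real" where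
  "cond E ends L y z = (\<Sum>e\<in>{e\<in>E. ends e = (y, z) \<or> ends e = (z, y)}. 1 / L e)"

definition wfg :: "'v set \<Rightarrow> 'e set \<Rightarrow> ('e \<Rightarrow> 'v \<times> 'v) \<Rightarrow> ('e \<Rightarrow> real) \<Rightarrow> bool" where
  "wfg V E ends L \<longleftrightarrow> finite V \<and> finite E \<and> (\<forall>e\<in>E. fst (ends e) \<in> V \<and> snd (ends e) \<in> V \<and> L e > 0)"

definition KK :: "'v set \<Rightarrow> 'e set \<Rightarrow> ('e \<Rightarrow> 'v \<times> 'v) \<Rightarrow> ('e \<Rightarrow> real) \<Rightarrow> real" where
  "KK V E ends L = det_on (V - {SOME q. q \<in> V}) (lapc V (cond E ends L))"

lemma cond_sym: "cond E ends L y z = cond E ends L z y"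
  unfolding cond_def by (rule sum.cong) auto

lemma goodc_cond: "wfg V E ends L \<Longrightarrow> goodc V (cond E ends L)"
proof -
  assume w: "wfg V E ends L"
  have "cond E ends L y z \<ge> 0" for y z
    unfolding cond_def by (rule sum_nonneg) (use w in \<open>auto simp: wfg_def less_imp_le\<close>)
  then show ?thesis using w cond_sym unfolding goodc_def wfg_def by metis
qed

lemma KK_at: "wfg V E ends L \<Longrightarrow> q \<in> V \<Longrightarrow> KK V E ends L = det_on (V - {q}) (lapc V (cond E ends L))"
  unfolding KK_def by (rule det_indep[OF goodc_cond]) (auto intro: someI)

lemma cond_insert:
  assumes "finite E" "e \<notin> E"
  shows "cond (insert e E) ends L y z = cond E ends L y z + (if ends e = (y, z) \<or> ends e = (z, y) then 1 / L e else 0)"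
proof -
  have "{d\<in>insert e E. ends d = (y, z) \<or> ends d = (z, y)} =
      (if ends e = (y, z) \<or> ends e = (z, y) then insert e {d\<in>E. ends d = (y, z) \<or> ends d = (z, y)} else {d\<in>E. ends d = (y, z) \<or> ends d = (z, y)})"
    by auto
  then show ?thesis unfolding cond_def using assms by simp
qed

lemma cond_remove:
  assumes "finite E" "e \<in> E"
  shows "cond E ends L y z = cond (E - {e}) ends L y z + (if ends e = (y, z) \<or> ends e = (z, y) then 1 / L e else 0)"
proof -
  have "E = insert e (E - {e})" using assms by auto
  then show ?thesis using cond_insert[of "E - {e}" e ends L y z] assms by (metis finite_Diff Diff_iff insertI1)
qed

lemma lapc_cong_entry:
  assumes "finite V" "y \<in> V" "z \<in> V" "\<And>u w. u \<in> V \<Longrightarrow> w \<in> V \<Longrightarrow> u \<noteq> w \<Longrightarrow> c u w = c' u w"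
  shows "lapc V c y z = lapc V c' y z"
  unfolding lapc_def using assms by (auto intro!: sum.cong)

lemma deg_cond:
  assumes w: "wfg V F ends L" and y: "y \<in> V"
  shows "(\<Sum>w\<in>V-{y}. cond F ends L y w) =
     (\<Sum>d\<in>{d\<in>F. (fst (ends d) = y \<and> snd (ends d) \<noteq> y) \<or> (snd (ends d) = y \<and> fst (ends d) \<noteq> y)}. 1 / L d)"
proof -
  have fin: "finite V" "finite F" using w unfolding wfg_def by auto
  have "(\<Sum>w\<in>V-{y}. cond F ends L y w) = (\<Sum>w\<in>V-{y}. \<Sum>d\<in>F. if ends d = (y, w) \<or> ends d = (w, y) then 1 / L d else 0)"
    unfolding cond_def by (rule sum.cong[OF refl], rule sum.inter_filter, simp add: fin)
  also have "\<dots> = (\<Sum>d\<in>F. \<Sum>w\<in>V-{y}. if ends d = (y, w) \<or> ends d = (w, y) then 1 / L d else 0)"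
    by (rule sum.swap)
  also have "\<dots> = (\<Sum>d\<in>F. if (fst (ends d) = y \<and> snd (ends d) \<noteq> y) \<or> (snd (ends d) = y \<and> fst (ends d) \<noteq> y) then 1 / L d else 0)"
  proof (rule sum.cong[OF refl])
    fix d assume d: "d \<in> F"
    obtain a b where ab: "ends d = (a, b)" by fastforce
    have abV: "a \<in> V" "b \<in> V" using w d ab unfolding wfg_def by force+
    let ?P = "(a = y \<and> b \<noteq> y) \<or> (b = y \<and> a \<noteq> y)"
    let ?t = "if a = y then b else a"
    have "(\<Sum>w\<in>V-{y}. if ends d = (y, w) \<or> ends d = (w, y) then 1 / L d else 0)
        = (\<Sum>w\<in>V-{y}. if ?P then (if w = ?t then 1 / L d else 0) else 0)"
    proof (rule sum.cong[OF refl])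
      fix w assume "w \<in> V - {y}"
      then have wy: "w \<noteq> y" by simp
      show "(if ends d = (y, w) \<or> ends d = (w, y) then 1 / L d else 0) = (if ?P then (if w = ?t then 1 / L d else 0) else 0)"
        unfolding ab using wy by (cases "a = y"; cases "b = y") simp_all
    qed
    also have "\<dots> = (if ?P then 1 / L d else 0)"
    proof (cases ?P)
      case True
      have "?t \<in> V - {y}" using True abV by auto
      then show ?thesis using True fin by simp
    next
      case False
      then show ?thesis by (simp only: if_False sum.neutral_const)
    qed
    finally show "(\<Sum>w\<in>V-{y}. if ends d = (y, w) \<or> ends d = (w, y) then 1 / L d else 0)
        = (if (fst (ends d) = y \<and> snd (ends d) \<noteq> y) \<or> (snd (ends d) = y \<and> fst (ends d) \<noteq> y) then 1 / L d else 0)"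
      unfolding ab by simp
  qed
  also have "\<dots> = (\<Sum>d\<in>{d\<in>F. (fst (ends d) = y \<and> snd (ends d) \<noteq> y) \<or> (snd (ends d) = y \<and> fst (ends d) \<noteq> y)}. 1 / L d)"
    by (rule sum.inter_filter[symmetric]) (use fin in auto)
  finally show ?thesis .
qed

lemma cv_eq: "contract_vertex ends d u = (if u = snd (ends d) then fst (ends d) else u)"
  unfolding contract_vertex_def by simp

lemma ce_eq: "contract_ends ends d d' = (contract_vertex ends d (fst (ends d')), contract_vertex ends d (snd (ends d')))"
  unfolding contract_ends_def by (simp add: map_prod_def split_beta)

lemma wfg_sub: "wfg V E ends L \<Longrightarrow> F \<subseteq> E \<Longrightarrow> wfg V F ends L"
  unfolding wfg_def by (auto intro: finite_subset)

lemma wfg_contract: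
  assumes w: "wfg V F ends L" and d: "d \<in> F" and nl: "fst (ends d) \<noteq> snd (ends d)"
  shows "wfg (V - {snd (ends d)}) (F - {d}) (contract_ends ends d) L"
  using w d nl unfolding wfg_def ce_eq cv_eq by auto

lemma cv_iff:
  assumes "y \<noteq> fst (ends d)" "y \<noteq> snd (ends d)"
  shows "contract_vertex ends d u = y \<longleftrightarrow> u = y"
  using assms unfolding cv_eq by auto

lemma merge_entries:
  assumes w: "wfg V F ends L" and d: "d \<in> F" and nl: "fst (ends d) \<noteq> snd (ends d)"
    and y: "y \<in> V" "y \<noteq> fst (ends d)" "y \<noteq> snd (ends d)"
    and z: "z \<in> V" "z \<noteq> fst (ends d)" "z \<noteq> snd (ends d)"
  shows "lapc (V - {snd (ends d)}) (cond (F - {d}) (contract_ends ends d) L) y z = lapc V (cond F ends L) y z"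
proof -
  let ?e' = "contract_ends ends d"
  have w': "wfg (V - {snd (ends d)}) (F - {d}) ?e' L" by (rule wfg_contract[OF w d nl])
  have cvy: "\<And>u. contract_vertex ends d u = y \<longleftrightarrow> u = y" by (rule cv_iff[of y ends d, OF y(2) y(3)])
  have cvz: "\<And>u. contract_vertex ends d u = z \<longleftrightarrow> u = z" by (rule cv_iff[of z ends d, OF z(2) z(3)])
  show ?thesis
  proof (cases "y = z")
    case False
    have eqv: "(?e' d' = (y, z) \<or> ?e' d' = (z, y)) \<longleftrightarrow> (ends d' = (y, z) \<or> ends d' = (z, y))" for d'
    proof -
      obtain u v where uv: "ends d' = (u, v)" by fastforce
      show ?thesis unfolding ce_eq uv by (simp add: cvy cvz)
    qed
    have nd: "\<not> (ends d = (y, z) \<or> ends d = (z, y))"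
    proof -
      obtain u v where uv: "ends d = (u, v)" by fastforce
      show ?thesis using y(2) z(2) unfolding uv by simp
    qed
    have "{d'\<in>F - {d}. ?e' d' = (y, z) \<or> ?e' d' = (z, y)} = {d'\<in>F - {d}. ends d' = (y, z) \<or> ends d' = (z, y)}"
      by (simp only: eqv)
    also have "\<dots> = {d'\<in>F. ends d' = (y, z) \<or> ends d' = (z, y)}" using nd by auto
    finally have "{d'\<in>F - {d}. ?e' d' = (y, z) \<or> ?e' d' = (z, y)} = {d'\<in>F. ends d' = (y, z) \<or> ends d' = (z, y)}" .
    then show ?thesis using False unfolding lapc_def cond_def by simp
  next
    case True
    have yV': "y \<in> V - {snd (ends d)}" using y by simp
    have eqv: "((fst (?e' d') = y \<and> snd (?e' d') \<noteq> y) \<or> (snd (?e' d') = y \<and> fst (?e' d') \<noteq> y))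
       \<longleftrightarrow> ((fst (ends d') = y \<and> snd (ends d') \<noteq> y) \<or> (snd (ends d') = y \<and> fst (ends d') \<noteq> y))" for d'
      unfolding ce_eq by (simp add: cvy)
    have nd: "\<not> ((fst (ends d) = y \<and> snd (ends d) \<noteq> y) \<or> (snd (ends d) = y \<and> fst (ends d) \<noteq> y))"
      using y(2,3) by simp
    have "{d'\<in>F - {d}. (fst (?e' d') = y \<and> snd (?e' d') \<noteq> y) \<or> (snd (?e' d') = y \<and> fst (?e' d') \<noteq> y)}
        = {d'\<in>F - {d}. (fst (ends d') = y \<and> snd (ends d') \<noteq> y) \<or> (snd (ends d') = y \<and> fst (ends d') \<noteq> y)}"
      by (simp only: eqv)
    also have "\<dots> = {d'\<in>F. (fst (ends d') = y \<and> snd (ends d') \<noteq> y) \<or> (snd (ends d') = y \<and> fst (ends d') \<noteq> y)}"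
      using nd by auto
    finally have "{d'\<in>F - {d}. (fst (?e' d') = y \<and> snd (?e' d') \<noteq> y) \<or> (snd (?e' d') = y \<and> fst (?e' d') \<noteq> y)}
        = {d'\<in>F. (fst (ends d') = y \<and> snd (ends d') \<noteq> y) \<or> (snd (ends d') = y \<and> fst (ends d') \<noteq> y)}" .
    moreover have "lapc (V - {snd (ends d)}) (cond (F - {d}) ?e' L) y z = (\<Sum>w\<in>V - {snd (ends d)} - {y}. cond (F - {d}) ?e' L y w)"
      using True unfolding lapc_def by simp
    moreover have "lapc V (cond F ends L) y z = (\<Sum>w\<in>V - {y}. cond F ends L y w)"
      using True unfolding lapc_def by simp
    ultimately show ?thesis using deg_cond[OF w' yV'] deg_cond[OF w y(1)] by simp
  qed
qed

lemma remove_entries: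
  assumes w: "wfg V E ends L" and e: "e \<in> E"
    and y: "y \<in> V" "y \<noteq> fst (ends e)" "y \<noteq> snd (ends e)" and z: "z \<in> V"
  shows "lapc V (cond E ends L) y z = lapc V (cond (E - {e}) ends L) y z"
proof -
  have fin: "finite E" using w unfolding wfg_def by auto
  have c: "cond E ends L y w = cond (E - {e}) ends L y w" for w
    using cond_remove[OF fin e, of ends L y w] y by (cases "ends e") auto
  have c2: "cond E ends L y = cond (E - {e}) ends L y" by (rule ext) (rule c)
  show ?thesis unfolding lapc_def c2 by simp
qed

lemma loop_entries:
  assumes w: "wfg V E ends L" and e: "e \<in> E" and lp: "fst (ends e) = snd (ends e)"
    and y: "y \<in> V" and z: "z \<in> V"
  shows "lapc V (cond E ends L) y z = lapc V (cond (E - {e}) ends L) y z"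
proof -
  have fin: "finite E" "finite V" using w unfolding wfg_def by auto
  have c: "u \<noteq> w \<Longrightarrow> cond E ends L u w = cond (E - {e}) ends L u w" for u w
    using cond_remove[OF fin(1) e, of ends L u w] lp by (cases "ends e") auto
  show ?thesis by (rule lapc_cong_entry[OF fin(2) y z]) (use c in auto)
qed

lemma KK_loop:
  assumes w: "wfg V E ends L" and e: "e \<in> E" and lp: "fst (ends e) = snd (ends e)" and V: "V \<noteq> {}"
  shows "KK V E ends L = KK V (E - {e}) ends L"
proof -
  obtain q where q: "q \<in> V" using V by auto
  have w': "wfg V (E - {e}) ends L" using wfg_sub[OF w] by blast
  show ?thesis unfolding KK_at[OF w q] KK_at[OF w' q]
    by (rule det_on_cong) (use loop_entries[OF w e lp] in auto)
qed

lemma KK_contract: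
  assumes w: "wfg V E ends L" and e: "e \<in> E" and nl: "fst (ends e) \<noteq> snd (ends e)"
  shows "KK (V - {snd (ends e)}) (E - {e}) (contract_ends ends e) L = det_on (V - {fst (ends e), snd (ends e)}) (lapc V (cond E ends L))"
proof -
  have a: "fst (ends e) \<in> V - {snd (ends e)}" using w e nl unfolding wfg_def by auto
  have s: "V - {snd (ends e)} - {fst (ends e)} = V - {fst (ends e), snd (ends e)}" by auto
  show ?thesis
    unfolding KK_at[OF wfg_contract[OF w e nl] a] s
    by (rule det_on_cong) (use merge_entries[OF w e nl] in auto)
qed

lemma KK_contract':
  assumes w: "wfg V E ends L" and e: "e \<in> E" and nl: "fst (ends e) \<noteq> snd (ends e)"
  shows "KK (V - {snd (ends e)}) (E - {e}) (contract_ends ends e) L = det_on (V - {fst (ends e), snd (ends e)}) (lapc V (cond (E - {e}) ends L))"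
  unfolding KK_contract[OF w e nl]
  by (rule det_on_cong) (use remove_entries[OF w e] in auto)

lemma KK_DC:
  assumes w: "wfg V E ends L" and e: "e \<in> E" and nl: "fst (ends e) \<noteq> snd (ends e)"
  shows "KK V E ends L = KK V (E - {e}) ends L + (1 / L e) * KK (V - {snd (ends e)}) (E - {e}) (contract_ends ends e) L"
proof -
  define a b where "a = fst (ends e)" and "b = snd (ends e)"
  have fin: "finite V" "finite E" using w unfolding wfg_def by auto
  have ab: "a \<in> V" "b \<in> V" "a \<noteq> b" using w e nl unfolding wfg_def a_def b_def by auto
  have w': "wfg V (E - {e}) ends L" using wfg_sub[OF w] by blast
  let ?M0 = "lapc V (cond (E - {e}) ends L)"
  let ?S = "V - {b}"
  have aS: "a \<in> ?S" using ab by auto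
  have finS: "finite ?S" using fin by simp
  have ent: "lapc V (cond E ends L) y z = rowupd ?M0 a (\<lambda>j. ?M0 a j + (1 / L e) * (if j = a then 1 else 0)) y z"
    if "y \<in> ?S" "z \<in> ?S" for y z
  proof -
    have cr: "cond E ends L u v = cond (E - {e}) ends L u v + (if ends e = (u, v) \<or> ends e = (v, u) then 1 / L e else 0)" for u v
      by (rule cond_remove[OF fin(2) e])
    have ee: "ends e = (a, b)" unfolding a_def b_def by simp
    show ?thesis
    proof (cases "y = z")
      case False
      then show ?thesis using that ab unfolding lapc_def rowupd_def cr ee by auto
    next
      case True
      have "(\<Sum>w\<in>V - {y}. cond E ends L y w) = (\<Sum>w\<in>V - {y}. cond (E - {e}) ends L y w)
          + (\<Sum>w\<in>V - {y}. if (a, b) = (y, w) \<or> (a, b) = (w, y) then 1 / L e else 0)"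
        unfolding cr ee by (simp add: sum.distrib)
      also have "(\<Sum>w\<in>V - {y}. if (a, b) = (y, w) \<or> (a, b) = (w, y) then 1 / L e else 0)
          = (if y = a then 1 / L e else 0)"
      proof (cases "y = a")
        case True
        have "(\<Sum>w\<in>V - {y}. if (a, b) = (y, w) \<or> (a, b) = (w, y) then 1 / L e else 0)
            = (\<Sum>w\<in>V - {y}. if w = b then 1 / L e else 0)"
          by (rule sum.cong) (use True ab in auto)
        also have "\<dots> = 1 / L e" using True ab fin by simp
        finally show ?thesis using True by simp
      next
        case False
        have "(\<Sum>w\<in>V - {y}. if (a, b) = (y, w) \<or> (a, b) = (w, y) then 1 / L e else 0) = (\<Sum>w\<in>V - {y}. 0)"
          by (rule sum.cong) (use False that in auto)
        then show ?thesis using False by simp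
      qed
      finally show ?thesis using True unfolding lapc_def rowupd_def by auto
    qed
  qed
  have "det_on ?S (lapc V (cond E ends L)) = det_on ?S (rowupd ?M0 a (\<lambda>j. ?M0 a j + (1 / L e) * (if j = a then 1 else 0)))"
    by (rule det_on_cong) (use ent in auto)
  also have "\<dots> = det_on ?S (rowupd ?M0 a (?M0 a)) + (1 / L e) * det_on ?S (rowupd ?M0 a (\<lambda>j. if j = a then 1 else 0))"
    by (rule det_on_row_linear[OF finS aS])
  also have "rowupd ?M0 a (?M0 a) = ?M0" unfolding rowupd_def by auto
  also have "det_on ?S (rowupd ?M0 a (\<lambda>j. if j = a then 1 else 0)) = det_on (?S - {a}) (rowupd ?M0 a (\<lambda>j. if j = a then 1 else 0))"
    using det_on_row_expand[OF finS aS, of "rowupd ?M0 a (\<lambda>j. if j = a then 1 else 0)"] by (simp add: rowupd_def)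
  also have "\<dots> = det_on (?S - {a}) ?M0" by (rule det_on_cong) (auto simp: rowupd_def)
  finally have "det_on ?S (lapc V (cond E ends L)) = det_on ?S ?M0 + (1 / L e) * det_on (V - {a, b}) ?M0"
    by (simp add: Diff_insert2[symmetric] insert_commute)
  then show ?thesis
    using KK_contract'[OF w e nl] unfolding KK_at[OF w ab(2)] KK_at[OF w' ab(2)] a_def b_def by simp
qed

definition KC :: "'v set \<Rightarrow> 'e set \<Rightarrow> ('e \<Rightarrow> 'v \<times> 'v) \<Rightarrow> ('e \<Rightarrow> real) \<Rightarrow> 'e \<Rightarrow> real" where
  "KC V E ends L e = KK (V - {snd (ends e)}) (E - {e}) (contract_ends ends e) L"

definition NL :: "'e set \<Rightarrow> ('e \<Rightarrow> 'v \<times> 'v) \<Rightarrow> 'e set" where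
  "NL E ends = {e\<in>E. fst (ends e) \<noteq> snd (ends e)}"

lemma nl_sym:
  assumes "fst (ends e) \<noteq> snd (ends e)" "fst (ends f) \<noteq> snd (ends f)"
  shows "(fst (contract_ends ends f e) \<noteq> snd (contract_ends ends f e)) \<longleftrightarrow> (fst (contract_ends ends e f) \<noteq> snd (contract_ends ends e f))"
proof -
  obtain a b where ab: "ends e = (a, b)" by fastforce
  obtain c d where cd: "ends f = (c, d)" by fastforce
  show ?thesis using assms unfolding ce_eq cv_eq ab cd by auto
qed

lemma nl_contract_imp:
  assumes "fst (contract_ends ends e f) \<noteq> snd (contract_ends ends e f)"
  shows "fst (ends f) \<noteq> snd (ends f)"
  using assms unfolding ce_eq by auto

lemma KK_comm:
  assumes w: "wfg V E ends L" and e: "e \<in> E" and f: "f \<in> E" and ef: "e \<noteq> f"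
    and nle: "fst (ends e) \<noteq> snd (ends e)" and nlf: "fst (ends f) \<noteq> snd (ends f)"
    and nlfe: "fst (contract_ends ends e f) \<noteq> snd (contract_ends ends e f)"
  shows "KC (V - {snd (ends e)}) (E - {e}) (contract_ends ends e) L f = KC (V - {snd (ends f)}) (E - {f}) (contract_ends ends f) L e"
proof -
  obtain a b where ab: "ends e = (a, b)" by fastforce
  obtain c d where cd: "ends f = (c, d)" by fastforce
  have nlef: "fst (contract_ends ends f e) \<noteq> snd (contract_ends ends f e)"
    using nl_sym[of ends e f, OF nle nlf] nlfe by simp
  show ?thesis
  proof (cases "{a, b} \<inter> {c, d} = {}")
    case True
    have s1: "snd (contract_ends ends e f) = d" using True unfolding ce_eq cv_eq ab cd by auto
    have s2: "snd (contract_ends ends f e) = b" using True unfolding ce_eq cv_eq ab cd by auto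
    have fn: "contract_ends (contract_ends ends e) f = contract_ends (contract_ends ends f) e"
    proof (rule ext)
      fix g
      show "contract_ends (contract_ends ends e) f g = contract_ends (contract_ends ends f) e g"
        using True unfolding ce_eq cv_eq ab cd by auto
    qed
    have "V - {snd (ends e)} - {d} = V - {snd (ends f)} - {b}" using ab cd by auto
    moreover have "E - {e} - {f} = E - {f} - {e}" by auto
    ultimately show ?thesis unfolding KC_def s1 s2 fn by simp
  next
    case False
    let ?V1 = "V - {snd (ends e)}" and ?E1 = "E - {e}" and ?n1 = "contract_ends ends e"
    let ?V2 = "V - {snd (ends f)}" and ?E2 = "E - {f}" and ?n2 = "contract_ends ends f"
    have w1: "wfg ?V1 ?E1 ?n1 L" by (rule wfg_contract[OF w e nle])
    have w2: "wfg ?V2 ?E2 ?n2 L" by (rule wfg_contract[OF w f nlf])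
    have f1: "f \<in> ?E1" using f ef by auto
    have e2: "e \<in> ?E2" using e ef by auto
    have V: "a \<in> V" "b \<in> V" "c \<in> V" "d \<in> V" using w e f ab cd unfolding wfg_def by force+
    have k1: "KC ?V1 ?E1 ?n1 L f = det_on (?V1 - {fst (?n1 f), snd (?n1 f)}) (lapc ?V1 (cond ?E1 ?n1 L))"
      unfolding KC_def by (rule KK_contract[OF w1 f1 nlfe])
    have k2: "KC ?V2 ?E2 ?n2 L e = det_on (?V2 - {fst (?n2 e), snd (?n2 e)}) (lapc ?V2 (cond ?E2 ?n2 L))"
      unfolding KC_def by (rule KK_contract[OF w2 e2 nlef])
    have set1: "?V1 - {fst (?n1 f), snd (?n1 f)} = V - {a, b, c, d}"
      using False nle nlf unfolding ce_eq cv_eq ab cd by auto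
    have set2: "?V2 - {fst (?n2 e), snd (?n2 e)} = V - {a, b, c, d}"
      using False nle nlf unfolding ce_eq cv_eq ab cd by auto
    have d1: "det_on (V - {a, b, c, d}) (lapc ?V1 (cond ?E1 ?n1 L)) = det_on (V - {a, b, c, d}) (lapc V (cond E ends L))"
    proof (rule det_on_cong)
      fix y z assume "y \<in> V - {a, b, c, d}" "z \<in> V - {a, b, c, d}"
      then show "lapc ?V1 (cond ?E1 ?n1 L) y z = lapc V (cond E ends L) y z"
        using merge_entries[OF w e nle, of y z] ab by auto
    qed
    have d2: "det_on (V - {a, b, c, d}) (lapc ?V2 (cond ?E2 ?n2 L)) = det_on (V - {a, b, c, d}) (lapc V (cond E ends L))"
    proof (rule det_on_cong)
      fix y z assume "y \<in> V - {a, b, c, d}" "z \<in> V - {a, b, c, d}"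
      then show "lapc ?V2 (cond ?E2 ?n2 L) y z = lapc V (cond E ends L) y z"
        using merge_entries[OF w f nlf, of y z] cd by auto
    qed
    show ?thesis unfolding k1 k2 set1 set2 d1 d2 ..
  qed
qed

lemma foster_aux:
  fixes E :: "'e set" and L :: "'e \<Rightarrow> real"
  assumes "finite E"
  shows "\<forall>(V::'v set) (ends::'e \<Rightarrow> 'v \<times> 'v). wfg V E ends L \<longrightarrow> V \<noteq> {} \<longrightarrow>
    (\<Sum>e\<in>NL E ends. (1 / L e) * KC V E ends L e) = (real (card V) - 1) * KK V E ends L"
  using assms
proof (induction E rule: finite_induct)
  case empty
  show ?case
  proof (intro allI impI)
    fix V :: "'v set" and ends :: "'e \<Rightarrow> 'v \<times> 'v"
    assume w: "wfg V {} ends L" and V: "V \<noteq> {}"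
    have fin: "finite V" using w unfolding wfg_def by auto
    obtain q where q: "q \<in> V" using V by auto
    have "(real (card V) - 1) * KK V {} ends L = 0"
    proof (cases "V = {q}")
      case True
      then show ?thesis by simp
    next
      case False
      then obtain y where y: "y \<in> V - {q}" using q by auto
      have "det_on (V - {q}) (lapc V (cond {} ends L)) = 0"
        by (rule det_on_zero_row[OF _ y]) (use fin in \<open>auto simp: lapc_def cond_def\<close>)
      then show ?thesis using KK_at[OF w q] by simp
    qed
    then show "(\<Sum>e\<in>NL {} ends. (1 / L e) * KC V {} ends L e) = (real (card V) - 1) * KK V {} ends L"
      by (simp add: NL_def)
  qed
next
  case (insert e E0)
  show ?case
  proof (intro allI impI)
    fix V :: "'v set" and ends :: "'e \<Rightarrow> 'v \<times> 'v"
    assume w: "wfg V (insert e E0) ends L" and V: "V \<noteq> {}"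
    let ?E = "insert e E0"
    have fin: "finite V" using w unfolding wfg_def by auto
    have w0: "wfg V E0 ends L" using wfg_sub[OF w] by blast
    have eE: "e \<in> ?E" by simp
    have Ee: "?E - {e} = E0" using insert.hyps by auto
    have IH0: "(\<Sum>f\<in>NL E0 ends. (1 / L f) * KC V E0 ends L f) = (real (card V) - 1) * KK V E0 ends L"
      using insert.IH w0 V by blast
    show "(\<Sum>f\<in>NL ?E ends. (1 / L f) * KC V ?E ends L f) = (real (card V) - 1) * KK V ?E ends L"
    proof (cases "fst (ends e) = snd (ends e)")
      case True
      have NLeq: "NL ?E ends = NL E0 ends" unfolding NL_def using True by auto
      have KKeq: "KK V ?E ends L = KK V E0 ends L" using KK_loop[OF w eE True V] Ee by simp
      have KCeq: "KC V ?E ends L f = KC V E0 ends L f" if f: "f \<in> NL E0 ends" for f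
      proof -
        have fE: "f \<in> ?E" and nlf: "fst (ends f) \<noteq> snd (ends f)" using f unfolding NL_def by auto
        have fe: "f \<noteq> e" using f insert.hyps unfolding NL_def by auto
        have wf: "wfg (V - {snd (ends f)}) (?E - {f}) (contract_ends ends f) L" by (rule wfg_contract[OF w fE nlf])
        have e2: "e \<in> ?E - {f}" using fe by auto
        have lp: "fst (contract_ends ends f e) = snd (contract_ends ends f e)" using True unfolding ce_eq by simp
        have ne: "V - {snd (ends f)} \<noteq> {}" using w fE nlf unfolding wfg_def by force
        have "KC V ?E ends L f = KK (V - {snd (ends f)}) (?E - {f} - {e}) (contract_ends ends f) L"
          unfolding KC_def by (rule KK_loop[OF wf e2 lp ne])
        moreover have "?E - {f} - {e} = E0 - {f}" using insert.hyps by auto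
        ultimately show ?thesis unfolding KC_def by simp
      qed
      show ?thesis unfolding NLeq KKeq using IH0 KCeq by simp
    next
      case False
      define b where "b = snd (ends e)"
      let ?n = "contract_ends ends e"
      have bV: "b \<in> V" using w unfolding wfg_def b_def by auto
      have we: "wfg (V - {b}) E0 ?n L" using wfg_contract[OF w eE False] Ee unfolding b_def by simp
      have Vb: "V - {b} \<noteq> {}" using w False unfolding wfg_def b_def by force
      have IHe: "(\<Sum>f\<in>NL E0 ?n. (1 / L f) * KC (V - {b}) E0 ?n L f) = (real (card (V - {b})) - 1) * KK (V - {b}) E0 ?n L"
        using insert.IH we Vb by blast
      have cpos: "card V > 0" using bV fin card_gt_0_iff by blast
      have cardb: "real (card (V - {b})) = real (card V) - 1"
        using bV fin cpos by (simp add: of_nat_diff card_Diff_singleton Suc_le_eq)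
      have NLeq: "NL ?E ends = insert e (NL E0 ends)" unfolding NL_def using False by auto
      have eNL: "e \<notin> NL E0 ends" using insert.hyps unfolding NL_def by auto
      have KKe: "KK V ?E ends L = KK V E0 ends L + (1 / L e) * KK (V - {b}) E0 ?n L"
        using KK_DC[OF w eE False] Ee unfolding b_def by simp
      have KCe: "KC V ?E ends L e = KK (V - {b}) E0 ?n L" unfolding KC_def b_def Ee ..
      define P where "P f \<longleftrightarrow> fst (contract_ends ends f e) \<noteq> snd (contract_ends ends f e)" for f
      have KCf: "KC V ?E ends L f = KC V E0 ends L f + (if P f then (1 / L e) * KC (V - {b}) E0 ?n L f else 0)"
        if f: "f \<in> NL E0 ends" for f
      proof -
        have fE: "f \<in> ?E" and nlf: "fst (ends f) \<noteq> snd (ends f)" using f unfolding NL_def by auto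
        have fe: "f \<noteq> e" using f insert.hyps unfolding NL_def by auto
        have wf: "wfg (V - {snd (ends f)}) (?E - {f}) (contract_ends ends f) L" by (rule wfg_contract[OF w fE nlf])
        have e2: "e \<in> ?E - {f}" using fe by auto
        have s: "?E - {f} - {e} = E0 - {f}" using insert.hyps by auto
        show ?thesis
        proof (cases "P f")
          case True
          have "KC V ?E ends L f = KK (V - {snd (ends f)}) (?E - {f} - {e}) (contract_ends ends f) L
              + (1 / L e) * KC (V - {snd (ends f)}) (?E - {f}) (contract_ends ends f) L e"
            unfolding KC_def by (rule KK_DC[OF wf e2 True[unfolded P_def]])
          moreover have "KC (V - {snd (ends f)}) (?E - {f}) (contract_ends ends f) L e = KC (V - {b}) (?E - {e}) ?n L f"
          proof -
            have nlfe: "fst (contract_ends ends e f) \<noteq> snd (contract_ends ends e f)"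
              using nl_sym[of ends e f, OF False nlf] True unfolding P_def by simp
            show ?thesis using KK_comm[OF w eE fE fe[symmetric] False nlf nlfe] unfolding b_def by simp
          qed
          ultimately show ?thesis using True unfolding s Ee KC_def by simp
        next
          case False2: False
          have lp: "fst (contract_ends ends f e) = snd (contract_ends ends f e)" using False2 unfolding P_def by simp
          have ne: "V - {snd (ends f)} \<noteq> {}" using w fE nlf unfolding wfg_def by force
          have "KC V ?E ends L f = KK (V - {snd (ends f)}) (?E - {f} - {e}) (contract_ends ends f) L"
            unfolding KC_def by (rule KK_loop[OF wf e2 lp ne])
          then show ?thesis using False2 unfolding s KC_def by simp
        qed
      qed
      have setP: "{f\<in>NL E0 ends. P f} = NL E0 ?n"
      proof -
        have "P f \<longleftrightarrow> fst (?n f) \<noteq> snd (?n f)" if "f \<in> NL E0 ends" for f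
          using nl_sym[of ends e f, OF False] that unfolding NL_def P_def by auto
        moreover have "f \<in> NL E0 ends" if "f \<in> NL E0 ?n" for f
          using that nl_contract_imp[of ends e f] unfolding NL_def by auto
        ultimately show ?thesis unfolding NL_def by auto
      qed
      have finNL: "finite (NL E0 ends)" unfolding NL_def using insert.hyps by simp
      have "(\<Sum>f\<in>NL E0 ends. (1 / L f) * KC V ?E ends L f)
          = (\<Sum>f\<in>NL E0 ends. (1 / L f) * KC V E0 ends L f)
            + (\<Sum>f\<in>NL E0 ends. if P f then (1 / L e) * ((1 / L f) * KC (V - {b}) E0 ?n L f) else 0)"
        by (simp add: KCf sum.distrib distrib_left cong: sum.cong) (rule sum.cong, auto)
      also have "(\<Sum>f\<in>NL E0 ends. if P f then (1 / L e) * ((1 / L f) * KC (V - {b}) E0 ?n L f) else 0)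
          = (1 / L e) * (\<Sum>f\<in>NL E0 ?n. (1 / L f) * KC (V - {b}) E0 ?n L f)"
        unfolding setP[symmetric] sum.inter_filter[OF finNL, symmetric] by (simp add: sum_distrib_left)
      finally have S: "(\<Sum>f\<in>NL E0 ends. (1 / L f) * KC V ?E ends L f)
          = (real (card V) - 1) * KK V E0 ends L + (1 / L e) * ((real (card V) - 1 - 1) * KK (V - {b}) E0 ?n L)"
        unfolding IH0 IHe cardb .
      have "(\<Sum>f\<in>NL ?E ends. (1 / L f) * KC V ?E ends L f)
          = (1 / L e) * KC V ?E ends L e + (\<Sum>f\<in>NL E0 ends. (1 / L f) * KC V ?E ends L f)"
        unfolding NLeq using finNL eNL by simp
      also have "\<dots> = (real (card V) - 1) * KK V ?E ends L"
        unfolding S KCe KKe by (simp add: algebra_simps diff_divide_distrib)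
      finally show ?thesis .
    qed
  qed
qed

lemma foster:
  assumes "wfg V E ends L" "V \<noteq> {}"
  shows "(\<Sum>e\<in>NL E ends. (1 / L e) * KC V E ends L e) = (real (card V) - 1) * KK V E ends L"
  using foster_aux[of E L] assms unfolding wfg_def by blast

lemma adj_rel_sym: "adj_rel E ends x y \<Longrightarrow> adj_rel E ends y x"
  unfolding adj_rel_def by auto

lemma reachable_sym:
  assumes "reachable E ends x y" shows "reachable E ends y x"
proof -
  have "(adj_rel E ends)\<^sup>*\<^sup>* x y" using assms unfolding reachable_def .
  then have "(adj_rel E ends)\<^sup>*\<^sup>* y x"
  proof (induction rule: rtranclp_induct)
    case base then show ?case by simp
  next
    case (step u v)
    then show ?case using adj_rel_sym[OF step.hyps(2)] by (meson converse_rtranclp_into_rtranclp)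
  qed
  then show ?thesis unfolding reachable_def .
qed

lemma cond_pos:
  assumes w: "wfg V E ends L" and d: "d \<in> E" and ud: "ends d = (u, v) \<or> ends d = (v, u)"
  shows "cond E ends L u v > 0"
proof -
  have fin: "finite E" using w unfolding wfg_def by auto
  have "1 / L d \<le> cond E ends L u v"
    unfolding cond_def
    by (rule member_le_sum) (use w d ud fin in \<open>auto simp: wfg_def less_imp_le\<close>)
  moreover have "1 / L d > 0" using w d unfolding wfg_def by auto
  ultimately show ?thesis by linarith
qed

lemma reach_to_cadj:
  assumes w: "wfg V E ends L" and x: "x \<in> V" and r: "reachable E ends x y"
  shows "(cadj V (cond E ends L))\<^sup>*\<^sup>* x y \<and> y \<in> V"
proof -
  have "(adj_rel E ends)\<^sup>*\<^sup>* x y" using r unfolding reachable_def .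
  then show ?thesis
  proof (induction rule: rtranclp_induct)
    case base then show ?case using x by simp
  next
    case (step u v)
    obtain d where d: "d \<in> E" "ends d = (u, v) \<or> ends d = (v, u)" using step.hyps(2) unfolding adj_rel_def by auto
    have vV: "v \<in> V" using w d unfolding wfg_def by (metis fst_conv snd_conv)
    show ?case
    proof (cases "u = v")
      case True then show ?thesis using step.IH by simp
    next
      case False
      have "cadj V (cond E ends L) u v" unfolding cadj_def using False vV step.IH cond_pos[OF w d(1) d(2)] by simp
      then show ?thesis using step.IH vV by (meson rtranclp.rtrancl_into_rtrancl)
    qed
  qed
qed

lemma cadj_to_reach:
  assumes "(cadj V (cond E ends L))\<^sup>*\<^sup>* x y"
  shows "reachable E ends x y"
  using assms unfolding reachable_def
proof (induction rule: rtranclp_induct)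
  case base then show ?case by simp
next
  case (step u v)
  have pos: "cond E ends L u v > 0" using step.hyps(2) unfolding cadj_def by auto
  have "{d\<in>E. ends d = (u, v) \<or> ends d = (v, u)} \<noteq> {}"
  proof
    assume A: "{d\<in>E. ends d = (u, v) \<or> ends d = (v, u)} = {}"
    have "cond E ends L u v = 0" unfolding cond_def A by simp
    then show False using pos by simp
  qed
  then have "adj_rel E ends u v" unfolding adj_rel_def by auto
  then show ?case using step.IH by (meson rtranclp.rtrancl_into_rtrancl)
qed

lemma mg_wfg: "metrized_graph V E ends L \<Longrightarrow> wfg V E ends L"
  unfolding metrized_graph_def wfg_def by auto

lemma conn_cconn:
  assumes w: "wfg V E ends L" and c: "\<forall>x\<in>V. \<forall>y\<in>V. reachable E ends x y"
  shows "cconn V (cond E ends L)"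
  unfolding cconn_def using reach_to_cadj[OF w] c by blast

lemma mg_cconn: "metrized_graph V E ends L \<Longrightarrow> cconn V (cond E ends L)"
  using conn_cconn[OF mg_wfg] unfolding metrized_graph_def by blast

lemma sum_sum_delta:
  assumes "finite V" "a \<in> V" "b \<in> V"
  shows "(\<Sum>y\<in>V. \<Sum>z\<in>V. if y = a then (if z = b then t else 0) else 0) = (t::real)"
proof -
  have "(\<Sum>z\<in>V. if y = a then (if z = b then t else 0) else 0) = (if y = a then t else 0)" for y
    using assms by (cases "y = a") simp_all
  then show ?thesis using assms by simp
qed

lemma energy_eq:
  assumes w: "wfg V E ends L"
  shows "energy E ends L f = energyc V (cond E ends L) f"
proof -
  have fin: "finite V" "finite E" using w unfolding wfg_def by auto
  let ?k = "\<lambda>d y z. (1 / L d) * (f y - f z)\<^sup>2"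
  have "(\<Sum>y\<in>V. \<Sum>z\<in>V. cond E ends L y z * (f y - f z)\<^sup>2)
      = (\<Sum>y\<in>V. \<Sum>z\<in>V. \<Sum>d\<in>E. if ends d = (y, z) \<or> ends d = (z, y) then ?k d y z else 0)"
  proof (intro sum.cong refl)
    fix y z
    have "cond E ends L y z * (f y - f z)\<^sup>2 = (\<Sum>d\<in>{d\<in>E. ends d = (y, z) \<or> ends d = (z, y)}. ?k d y z)"
      unfolding cond_def by (simp add: sum_distrib_right)
    also have "\<dots> = (\<Sum>d\<in>E. if ends d = (y, z) \<or> ends d = (z, y) then ?k d y z else 0)"
      by (rule sum.inter_filter[OF fin(2)])
    finally show "cond E ends L y z * (f y - f z)\<^sup>2 = (\<Sum>d\<in>E. if ends d = (y, z) \<or> ends d = (z, y) then ?k d y z else 0)" .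
  qed
  also have "\<dots> = (\<Sum>y\<in>V. \<Sum>d\<in>E. \<Sum>z\<in>V. if ends d = (y, z) \<or> ends d = (z, y) then ?k d y z else 0)"
    by (rule sum.cong[OF refl]) (rule sum.swap)
  also have "\<dots> = (\<Sum>d\<in>E. \<Sum>y\<in>V. \<Sum>z\<in>V. if ends d = (y, z) \<or> ends d = (z, y) then ?k d y z else 0)"
    by (rule sum.swap)
  also have "\<dots> = (\<Sum>d\<in>E. 2 * ((f (fst (ends d)) - f (snd (ends d)))\<^sup>2 / L d))"
  proof (rule sum.cong[OF refl])
    fix d assume d: "d \<in> E"
    obtain a b where ab: "ends d = (a, b)" by fastforce
    have abV: "a \<in> V" "b \<in> V" using w d ab unfolding wfg_def by force+
    have split: "(if ends d = (y, z) \<or> ends d = (z, y) then ?k d y z else 0)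
        = (if y = a then (if z = b then ?k d a b else 0) else 0) + (if y = b then (if z = a then ?k d b a else 0) else 0)" for y z
      unfolding ab by (cases "y = a"; cases "z = b"; cases "y = b"; cases "z = a") auto
    have "(\<Sum>y\<in>V. \<Sum>z\<in>V. if ends d = (y, z) \<or> ends d = (z, y) then ?k d y z else 0) = ?k d a b + ?k d b a"
      unfolding split sum.distrib sum_sum_delta[OF fin(1) abV] sum_sum_delta[OF fin(1) abV(2) abV(1)] ..
    also have "\<dots> = 2 * ((f (fst (ends d)) - f (snd (ends d)))\<^sup>2 / L d)"
      unfolding ab by (simp add: power2_commute)
    finally show "(\<Sum>y\<in>V. \<Sum>z\<in>V. if ends d = (y, z) \<or> ends d = (z, y) then ?k d y z else 0) = 2 * ((f (fst (ends d)) - f (snd (ends d)))\<^sup>2 / L d)" .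
  qed
  also have "\<dots> = 2 * (\<Sum>d\<in>E. (f (fst (ends d)) - f (snd (ends d)))\<^sup>2 / L d)"
    by (rule sum_distrib_left[symmetric])
  finally show ?thesis unfolding energy_def energyc_def by simp
qed

lemma nonbridge_conn:
  assumes m: "metrized_graph V E ends L" and e: "e \<in> E"
    and r: "reachable (E - {e}) ends (fst (ends e)) (snd (ends e))"
    and x: "x \<in> V" and y: "y \<in> V"
  shows "reachable (E - {e}) ends x y"
proof -
  have "reachable E ends x y" using m x y unfolding metrized_graph_def by blast
  then have "(adj_rel E ends)\<^sup>*\<^sup>* x y" unfolding reachable_def .
  then have "(adj_rel (E - {e}) ends)\<^sup>*\<^sup>* x y"
  proof (induction rule: rtranclp_induct)
    case base then show ?case by simp
  next
    case (step u v)
    obtain d where d: "d \<in> E" "ends d = (u, v) \<or> ends d = (v, u)" using step.hyps(2) unfolding adj_rel_def by auto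
    show ?case
    proof (cases "d = e")
      case False
      then have "adj_rel (E - {e}) ends u v" using d unfolding adj_rel_def by auto
      then show ?thesis using step.IH by (meson rtranclp.rtrancl_into_rtrancl)
    next
      case True
      have "reachable (E - {e}) ends u v"
        using d r reachable_sym[OF r] True by (cases "ends e") auto
      then show ?thesis using step.IH unfolding reachable_def by (meson rtranclp_trans)
    qed
  qed
  then show ?thesis unfolding reachable_def .
qed

lemma metrized_contract:
  assumes m: "metrized_graph V E ends L" and e: "e \<in> E" and nl: "fst (ends e) \<noteq> snd (ends e)"
  shows "metrized_graph (V - {snd (ends e)}) (E - {e}) (contract_ends ends e) L"
proof -
  have w: "wfg V E ends L" using mg_wfg[OF m] .
  have w': "wfg (V - {snd (ends e)}) (E - {e}) (contract_ends ends e) L" by (rule wfg_contract[OF w e nl])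
  have ne: "V - {snd (ends e)} \<noteq> {}" using w e nl unfolding wfg_def by force
  let ?phi = "contract_vertex ends e"
  have reach: "reachable (E - {e}) (contract_ends ends e) (?phi x) (?phi y)" if "x \<in> V" "y \<in> V" for x y
  proof -
    have "(adj_rel E ends)\<^sup>*\<^sup>* x y" using m that unfolding metrized_graph_def reachable_def by blast
    then have "(adj_rel (E - {e}) (contract_ends ends e))\<^sup>*\<^sup>* (?phi x) (?phi y)"
    proof (induction rule: rtranclp_induct)
      case base then show ?case by simp
    next
      case (step u v)
      obtain d where d: "d \<in> E" "ends d = (u, v) \<or> ends d = (v, u)" using step.hyps(2) unfolding adj_rel_def by auto
      show ?case
      proof (cases "d = e")
        case True
        then have "?phi u = ?phi v" using d unfolding cv_eq by (cases "ends e") auto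
        then show ?thesis using step.IH by simp
      next
        case False
        have "contract_ends ends e d = (?phi u, ?phi v) \<or> contract_ends ends e d = (?phi v, ?phi u)"
          using d unfolding ce_eq by auto
        then have "adj_rel (E - {e}) (contract_ends ends e) (?phi u) (?phi v)"
          using d False unfolding adj_rel_def by blast
        then show ?thesis using step.IH by (meson rtranclp.rtrancl_into_rtrancl)
      qed
    qed
    then show ?thesis unfolding reachable_def .
  qed
  have "reachable (E - {e}) (contract_ends ends e) x y" if "x \<in> V - {snd (ends e)}" "y \<in> V - {snd (ends e)}" for x y
    using reach[of x y] that unfolding cv_eq by auto
  then show ?thesis using w' ne unfolding metrized_graph_def wfg_def by blast
qed

lemma KK_pos:
  assumes m: "metrized_graph V E ends L"
  shows "KK V E ends L > 0"
proof -
  have w: "wfg V E ends L" using mg_wfg[OF m] .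
  obtain q where q: "q \<in> V" using m unfolding metrized_graph_def by auto
  show ?thesis
  proof (cases "\<exists>p\<in>V. p \<noteq> q")
    case True
    then obtain p where p: "p \<in> V" "p \<noteq> q" by auto
    have "det_on (V - {q}) (lapc V (cond E ends L)) > 0"
      using thmA[OF goodc_cond[OF w] mg_cconn[OF m] p(1) q p(2)] by blast
    then show ?thesis using KK_at[OF w q] by simp
  next
    case False
    then have E: "V - {q} = {}" by auto
    show ?thesis unfolding KK_at[OF w q] E by simp
  qed
qed

lemma res_ratio_loop:
  assumes "fst (ends e) = snd (ends e)"
  shows "res_ratio E ends L e = 0"
  using assms unfolding res_ratio_def eff_res_def reachable_def Let_def by simp

lemma res_ratio_nl:
  assumes m: "metrized_graph V E ends L" and e: "e \<in> E" and nl: "fst (ends e) \<noteq> snd (ends e)"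
  shows "res_ratio E ends L e = (1 / L e) * KC V E ends L e / KK V E ends L"
proof -
  define a b where "a = fst (ends e)" and "b = snd (ends e)"
  have w: "wfg V E ends L" using mg_wfg[OF m] .
  have w0: "wfg V (E - {e}) ends L" using wfg_sub[OF w] by blast
  have ab: "a \<in> V" "b \<in> V" "a \<noteq> b" using w e nl unfolding wfg_def a_def b_def by auto
  have Lpos: "L e > 0" using w e unfolding wfg_def by auto
  let ?c0 = "cond (E - {e}) ends L"
  define X where "X = det_on (V - {b}) (lapc V ?c0)"
  define Y where "Y = det_on (V - {a, b}) (lapc V ?c0)"
  have KKE: "KK V E ends L = X + (1 / L e) * Y"
    using KK_DC[OF w e nl] KK_at[OF w0 ab(2)] KK_contract'[OF w e nl] unfolding KC_def X_def Y_def a_def b_def by simp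
  have KCY: "KC V E ends L e = Y" using KK_contract'[OF w e nl] unfolding KC_def Y_def a_def b_def by simp
  have KKpos: "KK V E ends L > 0" by (rule KK_pos[OF m])
  show ?thesis
  proof (cases "reachable (E - {e}) ends a b")
    case True
    have conn: "\<forall>x\<in>V. \<forall>y\<in>V. reachable (E - {e}) ends x y"
      using nonbridge_conn[OF m e] True unfolding a_def b_def by blast
    have cc: "cconn V ?c0" by (rule conn_cconn[OF w0 conn])
    have g: "goodc V ?c0" by (rule goodc_cond[OF w0])
    note A = thmA[OF g cc ab(1) ab(2) ab(3)]
    have Xp: "X > 0" and Yp: "Y > 0" using A unfolding X_def Y_def by auto
    have setEq: "{energy (E - {e}) ends L f | f. f a = 1 \<and> f b = 0} = {energyc V ?c0 f | f. f a = 1 \<and> f b = 0}"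
      using energy_eq[OF w0] by simp
    have Inf: "Inf {energy (E - {e}) ends L f | f. f a = 1 \<and> f b = 0} = X / Y"
      unfolding setEq X_def Y_def by (rule Inf_energyc[OF g cc ab(1) ab(2) ab(3)])
    have R: "eff_res (E - {e}) ends L a b = Y / X"
      unfolding eff_res_def using ab(3) Inf by simp
    have "res_ratio E ends L e = (Y / X) / (L e + Y / X)"
      unfolding res_ratio_def Let_def a_def[symmetric] b_def[symmetric] using True R by simp
    also have "\<dots> = (1 / L e) * Y / (X + (1 / L e) * Y)"
      using Xp Yp Lpos by (simp add: field_simps)
    finally show ?thesis unfolding KKE KCY .
  next
    case False
    have "\<not> (cadj V ?c0)\<^sup>*\<^sup>* b a"
      using cadj_to_reach[of V "E - {e}" ends L b a] reachable_sym[of "E - {e}" ends b a] False by blast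
    then have X0: "X = 0" unfolding X_def by (rule det_zero_disconn[OF goodc_cond[OF w0] ab(2) ab(1)])
    have p: "0 < (1 / L e) * Y" using KKpos unfolding KKE X0 by simp
    have Ynz2: "Y \<noteq> 0" "L e \<noteq> 0" using p Lpos by auto
    have "res_ratio E ends L e = 1"
      unfolding res_ratio_def Let_def a_def[symmetric] b_def[symmetric] using False by simp
    then show ?thesis unfolding KKE KCY X0 using Ynz2 by simp
  qed
qed

lemma r_inv_formula:
  assumes m: "metrized_graph V E ends L"
  shows "r_inv E ends L = (\<Sum>e\<in>NL E ends. KC V E ends L e / KK V E ends L)"
proof -
  have w: "wfg V E ends L" using mg_wfg[OF m] .
  have fin: "finite E" using w unfolding wfg_def by auto
  have "r_inv E ends L = (\<Sum>e\<in>E. if fst (ends e) \<noteq> snd (ends e) then KC V E ends L e / KK V E ends L else 0)"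
    unfolding r_inv_def
  proof (rule sum.cong[OF refl])
    fix e assume e: "e \<in> E"
    have Lpos: "L e > 0" using w e unfolding wfg_def by auto
    show "L e * res_ratio E ends L e = (if fst (ends e) \<noteq> snd (ends e) then KC V E ends L e / KK V E ends L else 0)"
      using res_ratio_nl[OF m e] res_ratio_loop[of ends e E L] Lpos by auto
  qed
  also have "\<dots> = (\<Sum>e\<in>NL E ends. KC V E ends L e / KK V E ends L)"
    unfolding NL_def by (rule sum.inter_filter[OF fin, symmetric])
  finally show ?thesis .
qed

theorem theorem3p8:
  fixes V :: "'v set" and E :: "'e set" and ends :: "'e \<Rightarrow> 'v \<times> 'v" and L :: "'e \<Rightarrow> real"
  assumes "metrized_graph V E ends L"
  shows "(real (card V) - 2) * r_inv E ends L =
         (\<Sum>e\<in>E. res_ratio E ends L e * r_inv (E - {e}) (contract_ends ends e) L)"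
proof -
  note m = assms
  have w: "wfg V E ends L" using mg_wfg[OF m] .
  have fin: "finite E" "finite V" using w unfolding wfg_def by auto
  define K where "K = KK V E ends L"
  have Kpos: "K > 0" unfolding K_def by (rule KK_pos[OF m])
  define g where "g e f = (1 / L e) * KC (V - {snd (ends e)}) (E - {e}) (contract_ends ends e) L f" for e f
  have trm: "res_ratio E ends L e * r_inv (E - {e}) (contract_ends ends e) L
      = (if e \<in> NL E ends then (1 / K) * (\<Sum>f\<in>NL (E - {e}) (contract_ends ends e). g e f) else 0)"
    if e: "e \<in> E" for e
  proof (cases "fst (ends e) = snd (ends e)")
    case True
    then show ?thesis using res_ratio_loop[of ends e E L] unfolding NL_def by simp
  next
    case False
    have mc: "metrized_graph (V - {snd (ends e)}) (E - {e}) (contract_ends ends e) L"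
      by (rule metrized_contract[OF m e False])
    have KCpos: "KC V E ends L e > 0" unfolding KC_def by (rule KK_pos[OF mc])
    have r: "r_inv (E - {e}) (contract_ends ends e) L
        = (\<Sum>f\<in>NL (E - {e}) (contract_ends ends e). KC (V - {snd (ends e)}) (E - {e}) (contract_ends ends e) L f / KC V E ends L e)"
      using r_inv_formula[OF mc] unfolding KC_def by simp
    have "res_ratio E ends L e * r_inv (E - {e}) (contract_ends ends e) L
        = (1 / L e) * KC V E ends L e / K * (\<Sum>f\<in>NL (E - {e}) (contract_ends ends e). KC (V - {snd (ends e)}) (E - {e}) (contract_ends ends e) L f / KC V E ends L e)"
      unfolding res_ratio_nl[OF m e False] r K_def ..
    also have "\<dots> = (1 / K) * (\<Sum>f\<in>NL (E - {e}) (contract_ends ends e). g e f)"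
    proof -
      let ?S = "(\<Sum>f\<in>NL (E - {e}) (contract_ends ends e). KC (V - {snd (ends e)}) (E - {e}) (contract_ends ends e) L f)"
      have a: "(\<Sum>f\<in>NL (E - {e}) (contract_ends ends e). KC (V - {snd (ends e)}) (E - {e}) (contract_ends ends e) L f / KC V E ends L e) = ?S / KC V E ends L e"
        by (rule sum_divide_distrib[symmetric])
      have b: "(\<Sum>f\<in>NL (E - {e}) (contract_ends ends e). g e f) = (1 / L e) * ?S"
        unfolding g_def by (rule sum_distrib_left[symmetric])
      show ?thesis unfolding a b using KCpos by simp
    qed
    finally show ?thesis using e False unfolding NL_def by simp
  qed
  have "(\<Sum>e\<in>E. res_ratio E ends L e * r_inv (E - {e}) (contract_ends ends e) L)
      = (\<Sum>e\<in>E. if e \<in> NL E ends then (1 / K) * (\<Sum>f\<in>NL (E - {e}) (contract_ends ends e). g e f) else 0)"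
    using trm by (rule sum.cong[OF refl])
  also have "\<dots> = (\<Sum>e\<in>NL E ends. (1 / K) * (\<Sum>f\<in>NL (E - {e}) (contract_ends ends e). g e f))"
  proof -
    have "NL E ends = E \<inter> {e. e \<in> NL E ends}" unfolding NL_def by auto
    then show ?thesis using sum.inter_restrict[OF fin(1), of "\<lambda>e. (1 / K) * (\<Sum>f\<in>NL (E - {e}) (contract_ends ends e). g e f)" "{e. e \<in> NL E ends}"]
      by simp
  qed
  also have "\<dots> = (1 / K) * (\<Sum>e\<in>NL E ends. \<Sum>f\<in>NL (E - {e}) (contract_ends ends e). g e f)"
    by (simp add: sum_distrib_left)
  also have "(\<Sum>e\<in>NL E ends. \<Sum>f\<in>NL (E - {e}) (contract_ends ends e). g e f)
      = (\<Sum>f\<in>NL E ends. \<Sum>e\<in>NL (E - {f}) (contract_ends ends f). g e f)"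
  proof -
    have finNL: "finite (NL E ends)" using fin unfolding NL_def by simp
    have s1: "NL (E - {e}) (contract_ends ends e) = {f\<in>NL E ends. f \<in> NL (E - {e}) (contract_ends ends e)}" for e
      unfolding NL_def using nl_contract_imp[of ends e] by auto
    have s2: "{e\<in>NL E ends. f \<in> NL (E - {e}) (contract_ends ends e)} = NL (E - {f}) (contract_ends ends f)"
      if f: "f \<in> NL E ends" for f
    proof -
      have "e \<in> NL E ends \<and> f \<in> NL (E - {e}) (contract_ends ends e) \<longleftrightarrow> e \<in> NL (E - {f}) (contract_ends ends f)" for e
      proof
        assume a: "e \<in> NL E ends \<and> f \<in> NL (E - {e}) (contract_ends ends e)"
        have "fst (ends e) \<noteq> snd (ends e)" "fst (ends f) \<noteq> snd (ends f)" using a f unfolding NL_def by auto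
        then show "e \<in> NL (E - {f}) (contract_ends ends f)"
          using a nl_sym[of ends e f] unfolding NL_def by auto
      next
        assume a: "e \<in> NL (E - {f}) (contract_ends ends f)"
        have ne: "fst (ends e) \<noteq> snd (ends e)" using a nl_contract_imp[of ends f e] unfolding NL_def by auto
        have nf: "fst (ends f) \<noteq> snd (ends f)" using f unfolding NL_def by auto
        show "e \<in> NL E ends \<and> f \<in> NL (E - {e}) (contract_ends ends e)"
          using a f ne nf nl_sym[of ends e f] unfolding NL_def by auto
      qed
      then show ?thesis by blast
    qed
    have "(\<Sum>e\<in>NL E ends. \<Sum>f\<in>NL (E - {e}) (contract_ends ends e). g e f)
        = (\<Sum>e\<in>NL E ends. \<Sum>f\<in>{f\<in>NL E ends. f \<in> NL (E - {e}) (contract_ends ends e)}. g e f)"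
      using s1 by simp
    also have "\<dots> = (\<Sum>f\<in>NL E ends. \<Sum>e\<in>{e\<in>NL E ends. f \<in> NL (E - {e}) (contract_ends ends e)}. g e f)"
      by (rule sum.swap_restrict[OF finNL finNL])
    also have "\<dots> = (\<Sum>f\<in>NL E ends. \<Sum>e\<in>NL (E - {f}) (contract_ends ends f). g e f)"
      using s2 by (intro sum.cong refl) auto
    finally show ?thesis .
  qed
  also have "\<dots> = (\<Sum>f\<in>NL E ends. (real (card V) - 2) * KC V E ends L f)"
  proof (rule sum.cong[OF refl])
    fix f assume f: "f \<in> NL E ends"
    have fE: "f \<in> E" and nlf: "fst (ends f) \<noteq> snd (ends f)" using f unfolding NL_def by auto
    let ?Vf = "V - {snd (ends f)}" and ?Ef = "E - {f}" and ?nf = "contract_ends ends f"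
    have mf: "metrized_graph ?Vf ?Ef ?nf L" by (rule metrized_contract[OF m fE nlf])
    have wf: "wfg ?Vf ?Ef ?nf L" using mg_wfg[OF mf] .
    have nef: "?Vf \<noteq> {}" using mf unfolding metrized_graph_def by auto
    have bV: "snd (ends f) \<in> V" using w fE unfolding wfg_def by auto
    have cpos: "card V > 0" using bV fin card_gt_0_iff by blast
    have cardf: "real (card ?Vf) = real (card V) - 1"
      using bV fin cpos by (simp add: of_nat_diff card_Diff_singleton Suc_le_eq)
    have geq: "g e f = (1 / L e) * KC ?Vf ?Ef ?nf L e" if e: "e \<in> NL ?Ef ?nf" for e
    proof -
      have eE: "e \<in> E" and ef: "e \<noteq> f" using e unfolding NL_def by auto
      have nle: "fst (ends e) \<noteq> snd (ends e)" using e nl_contract_imp[of ends f e] unfolding NL_def by auto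
      have nlfe: "fst (contract_ends ends e f) \<noteq> snd (contract_ends ends e f)"
        using e nl_sym[of ends e f, OF nle nlf] unfolding NL_def by auto
      show ?thesis unfolding g_def using KK_comm[OF w eE fE ef nle nlf nlfe] by simp
    qed
    have "(\<Sum>e\<in>NL ?Ef ?nf. g e f) = (\<Sum>e\<in>NL ?Ef ?nf. (1 / L e) * KC ?Vf ?Ef ?nf L e)"
      using geq by (rule sum.cong[OF refl])
    also have "\<dots> = (real (card ?Vf) - 1) * KK ?Vf ?Ef ?nf L" by (rule foster[OF wf nef])
    also have "\<dots> = (real (card V) - 2) * KC V E ends L f" unfolding cardf KC_def by simp
    finally show "(\<Sum>e\<in>NL ?Ef ?nf. g e f) = (real (card V) - 2) * KC V E ends L f" .
  qed
  also have "(1 / K) * (\<Sum>f\<in>NL E ends. (real (card V) - 2) * KC V E ends L f)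
      = (real (card V) - 2) * (\<Sum>f\<in>NL E ends. KC V E ends L f / K)"
    by (simp add: sum_distrib_left sum_divide_distrib[symmetric] field_simps)
  also have "\<dots> = (real (card V) - 2) * r_inv E ends L"
    using r_inv_formula[OF m] unfolding K_def by simp
  finally show ?thesis ..
qed

end
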